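(* Let $G$ be a continuous subgroup of the affine group $\mathcal G$ (with the topology inherited from $\mathcal G\cong(0,\infty)\times\mathbb R$) with a strongly continuous unitary representation $G\ni g\mapsto U_g$, and let $\dot A$ be a $G$-invariant closed densely defined symmetric operator with finite deficiency indices. Then the map $(g,V)\mapsto\Gamma_g(V)$ from $G\times\mathcal V$ to $\mathcal V$ is continuous. In particular, if $G=\{g_t\}_{t\in\mathbb R}$ is a continuous one-parameter subgroup of $\mathcal G$, then for every $V\in\mathcal V$ the trajectory $\mathbb R\ni t\mapsto\Gamma_{g_t}(V)$ is continuous.
   Context: $\mathcal G$ is the group of affine maps $g(x)=ax+b$ of $\mathbb R$ with $a>0$; for an operator $A$, $g(A)=aA+bI$. A densely defined closed operator $A$ is $G$-invariant (with respect to $g\mapsto U_g$) if $U_g(\mathrm{Dom}(A))=\mathrm{Dom}(A)$ and $U_gAU_g^*f=aAf+bf$ for all $f\in\mathrm{Dom}(A)$, $g\in G$. Let $\mathcal N_\pm=\ker((\dot A)^*\mp iI)$ and let $\mathcal V$ be the set of contractions from $\mathcal N_+$ to $\mathcal N_-$ (with the norm topology). Every $V\in\mathcal V$ determines the maximal dissipative extension $A$ of $\dot A$ given by restricting $(\dot A)^*$ to $\mathrm{Dom}(\dot A)\dotplus(I-V)\mathcal N_+$, and every maximal dissipative $A$ with $\dot A\subset A\subset(\dot A)^*$ arises from a unique such $V$. For $g\in G$, the restriction $A_g$ of $(\dot A)^*$ to $U_g(\mathrm{Dom}(A))$ is again a maximal dissipative extension of $\dot A$, and $\Gamma_g(V)\in\mathcal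 V$ is the unique contraction with $\mathrm{Dom}(A_g)=\mathrm{Dom}(\dot A)\dotplus(I-\Gamma_g(V))\mathcal N_+$. *)

theory Defs
  imports "HOL-Analysis.Analysis"
begin

text \<open>The distribution has no complex inner product spaces, so we introduce them as a
type class: a real Banach space carrying a compatible complex scalar multiplication
and a complex inner product (antilinear in the first argument) inducing the norm.\<close>

class chilbert = real_normed_vector + complete_space +
  fixes hs_scaleC :: "complex \<Rightarrow> 'a \<Rightarrow> 'a"
    and hs_inner :: "'a \<Rightarrow> 'a \<Rightarrow> complex"
  assumes hs_scaleC_add_right: "hs_scaleC c (x + y) = hs_scaleC c x + hs_scaleC c y"
    and hs_scaleC_add_left: "hs_scaleC (c + d) x = hs_scaleC c x + hs_scaleC d x"
    and hs_scaleC_scaleC: "hs_scaleC c (hs_scaleC d x) = hs_scaleC (c * d) x"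
    and hs_scaleC_one: "hs_scaleC 1 x = x"
    and hs_scaleR_scaleC: "scaleR r x = hs_scaleC (complex_of_real r) x"
    and hs_inner_add_left: "hs_inner (x + y) z = hs_inner x z + hs_inner y z"
    and hs_inner_scaleC_left: "hs_inner (hs_scaleC c x) y = cnj c * hs_inner x y"
    and hs_inner_commute: "hs_inner x y = cnj (hs_inner y x)"
    and hs_norm_inner: "complex_of_real ((norm x)\<^sup>2) = hs_inner x x"

definition csubspace :: "'a::chilbert set \<Rightarrow> bool" where
  "csubspace S \<longleftrightarrow> 0 \<in> S \<and> (\<forall>x\<in>S. \<forall>y\<in>S. x + y \<in> S) \<and> (\<forall>c. \<forall>x\<in>S. hs_scaleC c x \<in> S)"

definition clinear_on :: "'a::chilbert set \<Rightarrow> ('a \<Rightarrow> 'a) \<Rightarrow> bool" where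
  "clinear_on D A \<longleftrightarrow> (\<forall>x\<in>D. \<forall>y\<in>D. A (x + y) = A x + A y) \<and>
     (\<forall>c. \<forall>x\<in>D. A (hs_scaleC c x) = hs_scaleC c (A x))"

definition cspan :: "'a::chilbert set \<Rightarrow> 'a set" where
  "cspan S = {(\<Sum>x\<in>F. hs_scaleC (c x) x) | F c. finite F \<and> F \<subseteq> S}"

definition finite_dim :: "'a::chilbert set \<Rightarrow> bool" where
  "finite_dim S \<longleftrightarrow> (\<exists>F. finite F \<and> F \<subseteq> S \<and> S \<subseteq> cspan F)"

section \<open>(Unbounded) operators, given by a domain D and an action A on D\<close>

definition lin_op :: "'a::chilbert set \<Rightarrow> ('a \<Rightarrow> 'a) \<Rightarrow> bool" where
  "lin_op D A \<longleftrightarrow> csubspace D \<and> clinear_on D A"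

definition densely_defined :: "'a::chilbert set \<Rightarrow> bool" where
  "densely_defined D \<longleftrightarrow> closure D = UNIV"

definition closed_op :: "'a::chilbert set \<Rightarrow> ('a \<Rightarrow> 'a) \<Rightarrow> bool" where
  "closed_op D A \<longleftrightarrow> closed {(x, A x) | x. x \<in> D}"

definition symmetric_op :: "'a::chilbert set \<Rightarrow> ('a \<Rightarrow> 'a) \<Rightarrow> bool" where
  "symmetric_op D A \<longleftrightarrow> (\<forall>x\<in>D. \<forall>y\<in>D. hs_inner (A x) y = hs_inner x (A y))"

definition adj_dom :: "'a::chilbert set \<Rightarrow> ('a \<Rightarrow> 'a) \<Rightarrow> 'a set" where
  "adj_dom D A = {y. \<exists>z. \<forall>x\<in>D. hs_inner (A x) y = hs_inner x z}"

definition adj :: "'a::chilbert set \<Rightarrow> ('a \<Rightarrow> 'a) \<Rightarrow> 'a \<Rightarrow> 'a" where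
  "adj D A y = (THE z. \<forall>x\<in>D. hs_inner (A x) y = hs_inner x z)"

text \<open>Deficiency subspaces: N+ = ker(A* - iI) (s = 1), N- = ker(A* + iI) (s = -1).\<close>

definition deficiency :: "'a::chilbert set \<Rightarrow> ('a \<Rightarrow> 'a) \<Rightarrow> complex \<Rightarrow> 'a set" where
  "deficiency D A s = {y \<in> adj_dom D A. adj D A y = hs_scaleC (s * \<i>) y}"

abbreviation Nplus where "Nplus D A \<equiv> deficiency D A 1"
abbreviation Nminus where "Nminus D A \<equiv> deficiency D A (-1)"

text \<open>The set V of contractions N+ \<rightarrow> N-. Each contraction is represented canonically by
the function which agrees with it on N+ and vanishes outside N+.\<close>

definition contractions :: "'a::chilbert set \<Rightarrow> ('a \<Rightarrow> 'a) \<Rightarrow> ('a \<Rightarrow> 'a) set" where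
  "contractions D A = {V. clinear_on (Nplus D A) V \<and> V ` Nplus D A \<subseteq> Nminus D A \<and>
      (\<forall>f\<in>Nplus D A. norm (V f) \<le> norm f) \<and> (\<forall>f. f \<notin> Nplus D A \<longrightarrow> V f = 0)}"

definition opdist :: "'a::chilbert set \<Rightarrow> ('a \<Rightarrow> 'a) \<Rightarrow> ('a \<Rightarrow> 'a) \<Rightarrow> ('a \<Rightarrow> 'a) \<Rightarrow> real" where
  "opdist D A V W = (SUP f\<in>{f \<in> Nplus D A. norm f \<le> 1}. norm (V f - W f))"

text \<open>Domain of the maximal dissipative extension determined by V:
Dom(A dot) + (I - V) N+.\<close>

definition ext_dom :: "'a::chilbert set \<Rightarrow> ('a \<Rightarrow> 'a) \<Rightarrow> ('a \<Rightarrow> 'a) \<Rightarrow> 'a set" where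
  "ext_dom D A V = {x + (f - V f) | x f. x \<in> D \<and> f \<in> Nplus D A}"

section \<open>The affine group: g(x) = a x + b is encoded as the pair (a, b) with a > 0\<close>

definition affgrp :: "(real \<times> real) set" where
  "affgrp = {g. fst g > 0}"

definition gmult :: "real \<times> real \<Rightarrow> real \<times> real \<Rightarrow> real \<times> real" where
  "gmult g h = (fst g * fst h, fst g * snd h + snd g)"

definition ginv :: "real \<times> real \<Rightarrow> real \<times> real" where
  "ginv g = (1 / fst g, - snd g / fst g)"

definition aff_subgroup :: "(real \<times> real) set \<Rightarrow> bool" where
  "aff_subgroup G \<longleftrightarrow> G \<subseteq> affgrp \<and> (1, 0) \<in> G \<and>
     (\<forall>g\<in>G. \<forall>h\<in>G. gmult g h \<in> G) \<and> (\<forall>g\<in>G. ginv g \<in> G)"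

definition unitary :: "('a::chilbert \<Rightarrow> 'a) \<Rightarrow> bool" where
  "unitary U \<longleftrightarrow> clinear_on UNIV U \<and> bij U \<and> (\<forall>x. norm (U x) = norm x)"

definition strongly_cont_unitary_rep ::
    "(real \<times> real) set \<Rightarrow> (real \<times> real \<Rightarrow> 'a::chilbert \<Rightarrow> 'a) \<Rightarrow> bool" where
  "strongly_cont_unitary_rep G U \<longleftrightarrow>
     (\<forall>g\<in>G. unitary (U g)) \<and> U (1, 0) = id \<and>
     (\<forall>g\<in>G. \<forall>h\<in>G. U (gmult g h) = U g \<circ> U h) \<and>
     (\<forall>f. continuous_on G (\<lambda>g. U g f))"

definition G_invariant ::
    "(real \<times> real) set \<Rightarrow> (real \<times> real \<Rightarrow> 'a::chilbert \<Rightarrow> 'a) \<Rightarrow> 'a set \<Rightarrow> ('a \<Rightarrow> 'a) \<Rightarrow> bool" where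
  "G_invariant G U D A \<longleftrightarrow> (\<forall>g\<in>G. U g ` D = D \<and>
     (\<forall>f\<in>D. U g (A (inv (U g) f)) = scaleR (fst g) (A f) + scaleR (snd g) f))"

definition Gamma ::
    "(real \<times> real \<Rightarrow> 'a::chilbert \<Rightarrow> 'a) \<Rightarrow> 'a set \<Rightarrow> ('a \<Rightarrow> 'a) \<Rightarrow> real \<times> real \<Rightarrow> ('a \<Rightarrow> 'a) \<Rightarrow> ('a \<Rightarrow> 'a)" where
  "Gamma U D A g V = (THE W. W \<in> contractions D A \<and> U g ` ext_dom D A V = ext_dom D A W)"

end

theory Submission
  imports Defs
begin


notation hs_scaleC (infixr "*\<^sub>C" 75)

lemma sC_zero_right[simp]: "c *\<^sub>C (0::'a::chilbert) = 0"
  using hs_scaleC_add_right[of c "0::'a" 0] by simp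
lemma sC_zero_left[simp]: "0 *\<^sub>C (x::'a::chilbert) = 0"
  using hs_scaleC_add_left[of 0 0 x] by simp
lemma sC_one[simp]: "1 *\<^sub>C (x::'a::chilbert) = x" by (rule hs_scaleC_one)
lemma sC_minus_right: "c *\<^sub>C (- (x::'a::chilbert)) = - (c *\<^sub>C x)"
  using hs_scaleC_add_right[of c x "-x"] by (simp add: eq_neg_iff_add_eq_0 add.commute)
lemma sC_minus_left: "(- c) *\<^sub>C (x::'a::chilbert) = - (c *\<^sub>C x)"
  using hs_scaleC_add_left[of c "-c" x] by (simp add: eq_neg_iff_add_eq_0 add.commute)
lemma sC_diff_right: "c *\<^sub>C ((x::'a::chilbert) - y) = c *\<^sub>C x - c *\<^sub>C y"
  using hs_scaleC_add_right[of c x "-y"] by (simp add: sC_minus_right)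
lemma sC_diff_left: "(c - d) *\<^sub>C (x::'a::chilbert) = c *\<^sub>C x - d *\<^sub>C x"
  using hs_scaleC_add_left[of c "-d" x] by (simp add: sC_minus_left)
lemmas sC_add_right = hs_scaleC_add_right
lemmas sC_add_left = hs_scaleC_add_left
lemma sC_sC[simp]: "c *\<^sub>C (d *\<^sub>C (x::'a::chilbert)) = (c * d) *\<^sub>C x" by (rule hs_scaleC_scaleC)
lemma sC_sum_right: "c *\<^sub>C (\<Sum>i\<in>F. f i) = (\<Sum>i\<in>F. c *\<^sub>C (f i :: 'a::chilbert))"
  by (induction F rule: infinite_finite_induct) (auto simp: sC_add_right)
lemma sC_sum_left: "(\<Sum>i\<in>F. f i) *\<^sub>C (x::'a::chilbert) = (\<Sum>i\<in>F. f i *\<^sub>C x)"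
  by (induction F rule: infinite_finite_induct) (auto simp: sC_add_left)
lemma sC_real: "complex_of_real r *\<^sub>C (x::'a::chilbert) = r *\<^sub>R x"
  by (simp add: hs_scaleR_scaleC)

lemma ip_add_left: "hs_inner ((x::'a::chilbert) + y) z = hs_inner x z + hs_inner y z"
  by (rule hs_inner_add_left)
lemma ip_add_right: "hs_inner (z::'a::chilbert) (x + y) = hs_inner z x + hs_inner z y"
  by (metis hs_inner_commute hs_inner_add_left complex_cnj_add)
lemma ip_scale_left: "hs_inner (c *\<^sub>C (x::'a::chilbert)) y = cnj c * hs_inner x y"
  by (rule hs_inner_scaleC_left)
lemma ip_scale_right: "hs_inner (x::'a::chilbert) (c *\<^sub>C y) = c * hs_inner x y"
  by (metis hs_inner_commute hs_inner_scaleC_left complex_cnj_mult complex_cnj_cnj)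
lemma ip_zero_left[simp]: "hs_inner (0::'a::chilbert) y = 0"
  using ip_add_left[of "0::'a" 0 y] by simp
lemma ip_zero_right[simp]: "hs_inner (y::'a::chilbert) 0 = 0"
  using ip_add_right[of y "0::'a" 0] by simp
lemma ip_minus_left: "hs_inner (- (x::'a::chilbert)) y = - hs_inner x y"
  using ip_add_left[of x "-x" y] by (simp add: eq_neg_iff_add_eq_0 add.commute)
lemma ip_minus_right: "hs_inner (y::'a::chilbert) (- x) = - hs_inner y x"
  using ip_add_right[of y x "-x"] by (simp add: eq_neg_iff_add_eq_0 add.commute)
lemma ip_diff_left: "hs_inner ((x::'a::chilbert) - z) y = hs_inner x y - hs_inner z y"
  using ip_add_left[of x "-z" y] by (simp add: ip_minus_left)
lemma ip_diff_right: "hs_inner (y::'a::chilbert) (x - z) = hs_inner y x - hs_inner y z"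
  using ip_add_right[of y x "-z"] by (simp add: ip_minus_right)
lemma ip_sum_left: "hs_inner (\<Sum>i\<in>F. f i) (y::'a::chilbert) = (\<Sum>i\<in>F. hs_inner (f i) y)"
  by (induction F rule: infinite_finite_induct) (auto simp: ip_add_left)
lemma ip_sum_right: "hs_inner (y::'a::chilbert) (\<Sum>i\<in>F. f i) = (\<Sum>i\<in>F. hs_inner y (f i))"
  by (induction F rule: infinite_finite_induct) (auto simp: ip_add_right)
lemmas ip_simps = ip_add_left ip_add_right ip_scale_left ip_scale_right ip_minus_left ip_minus_right
  ip_diff_left ip_diff_right

lemma ip_self: "hs_inner (x::'a::chilbert) x = complex_of_real ((norm x)\<^sup>2)"
  by (rule hs_norm_inner[symmetric])
lemma ip_self_Re: "Re (hs_inner (x::'a::chilbert) x) = (norm x)\<^sup>2"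
  by (simp add: ip_self)
lemma ip_self_Im: "Im (hs_inner (x::'a::chilbert) x) = 0"
  by (simp add: ip_self)
lemma ip_self_zero: "hs_inner (x::'a::chilbert) x = 0 \<longleftrightarrow> x = 0"
  by (simp add: ip_self)
lemma ip_cnj: "cnj (hs_inner (x::'a::chilbert) y) = hs_inner y x"
  by (metis hs_inner_commute)
lemma ip_Re_sym: "Re (hs_inner (x::'a::chilbert) y) = Re (hs_inner y x)"
  by (subst hs_inner_commute) simp
lemma ip_Im_sym: "Im (hs_inner (x::'a::chilbert) y) = - Im (hs_inner y x)"
  by (subst hs_inner_commute) simp

lemma norm_sC: "norm (c *\<^sub>C (x::'a::chilbert)) = cmod c * norm x"
proof -
  have "complex_of_real ((norm (c *\<^sub>C x))\<^sup>2) = cnj c * c * hs_inner x x"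
    unfolding hs_norm_inner by (simp add: ip_scale_left ip_scale_right)
  also have "\<dots> = complex_of_real ((cmod c * norm x)\<^sup>2)"
    using complex_norm_square[of c] by (simp add: ip_self power_mult_distrib mult.commute)
  finally have "(norm (c *\<^sub>C x))\<^sup>2 = (cmod c * norm x)\<^sup>2" using of_real_eq_iff by blast
  then show ?thesis by (simp add: power2_eq_iff_nonneg)
qed

lemma norm_add_sq: "(norm ((x::'a::chilbert) + y))\<^sup>2 = (norm x)\<^sup>2 + (norm y)\<^sup>2 + 2 * Re (hs_inner x y)"
proof -
  have "(norm (x + y))\<^sup>2 = Re (hs_inner (x+y) (x+y))" by (simp add: ip_self_Re)
  also have "\<dots> = (norm x)\<^sup>2 + (norm y)\<^sup>2 + Re (hs_inner x y) + Re (hs_inner y x)"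
    by (simp add: ip_add_left ip_add_right ip_self_Re)
  finally show ?thesis using ip_Re_sym[of y x] by simp
qed

lemma norm_diff_sq: "(norm ((x::'a::chilbert) - y))\<^sup>2 = (norm x)\<^sup>2 + (norm y)\<^sup>2 - 2 * Re (hs_inner x y)"
  using norm_add_sq[of x "-y"] by (simp add: ip_minus_right)

lemma cauchy_schwarz: "cmod (hs_inner (x::'a::chilbert) y) \<le> norm x * norm y"
proof (cases "x = 0")
  case True then show ?thesis by simp
next
  case False
  define t where "t = hs_inner x y / complex_of_real ((norm x)\<^sup>2)"
  have nx: "norm x > 0" using False by simp
  have "0 \<le> (norm (y - t *\<^sub>C x))\<^sup>2" by simp
  also have "\<dots> = (norm y)\<^sup>2 + (cmod t * norm x)\<^sup>2 - 2 * Re (hs_inner y (t *\<^sub>C x))"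
    by (simp add: norm_diff_sq norm_sC)
  also have "hs_inner y (t *\<^sub>C x) = t * cnj (hs_inner x y)"
    by (simp add: ip_scale_right ip_cnj)
  also have "Re (t * cnj (hs_inner x y)) = (cmod (hs_inner x y))\<^sup>2 / (norm x)\<^sup>2"
    unfolding t_def by (simp add: complex_norm_square[symmetric] Re_divide_of_real)
  also have "cmod t = cmod (hs_inner x y) / (norm x)\<^sup>2"
    unfolding t_def by (simp add: norm_divide norm_power)
  finally have "0 \<le> (norm y)\<^sup>2 - (cmod (hs_inner x y))\<^sup>2 / (norm x)\<^sup>2"
    using nx by (simp add: power_divide power2_eq_square field_simps)
  then have "(cmod (hs_inner x y))\<^sup>2 \<le> (norm x * norm y)\<^sup>2"
    using nx by (simp add: field_simps power_mult_distrib)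
  then show ?thesis by (simp add: power2_le_iff_abs_le)
qed



lemma dense_orth_zero:
  assumes "closure D = UNIV" "\<forall>x\<in>D. hs_inner x (w::'a::chilbert) = 0"
  shows "w = 0"
proof (rule ccontr)
  assume w: "w \<noteq> 0"
  then have nw: "norm w > 0" by simp
  have "w \<in> closure D" using assms by simp
  then obtain x where x: "x \<in> D" "dist x w < norm w" using nw closure_approachable by blast
  have "hs_inner w w = hs_inner (w - x) w" using assms x by (simp add: ip_diff_left)
  moreover have "(norm w)\<^sup>2 = cmod (hs_inner w w)" by (simp add: ip_self norm_power)
  ultimately have "(norm w)\<^sup>2 = cmod (hs_inner (w - x) w)" by simp
  also have "\<dots> \<le> norm (w - x) * norm w" by (rule cauchy_schwarz)
  also have "\<dots> < norm w * norm w" using x nw by (simp add: dist_norm norm_minus_commute)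
  finally show False by (simp add: power2_eq_square)
qed

lemma ip_cont_left: "continuous_on S (\<lambda>x. hs_inner (x::'a::chilbert) y)"
proof (rule continuous_on_iff[THEN iffD2], intro ballI allI impI)
  fix x e assume "x \<in> S" "(e::real) > 0"
  show "\<exists>d>0. \<forall>x'\<in>S. dist x' x < d \<longrightarrow> dist (hs_inner x' y) (hs_inner x y) < e"
  proof (intro exI[of _ "e / (norm y + 1)"] conjI ballI impI)
    show "e / (norm y + 1) > 0" using \<open>e>0\<close> by (smt (verit) divide_pos_pos norm_ge_zero)
    fix x' assume "x' \<in> S" "dist x' x < e / (norm y + 1)"
    have "dist (hs_inner x' y) (hs_inner x y) = cmod (hs_inner (x' - x) y)"
      by (simp add: dist_norm ip_diff_left)
    also have "\<dots> \<le> norm (x' - x) * norm y" by (rule cauchy_schwarz)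
    also have "\<dots> \<le> norm (x' - x) * (norm y + 1)" by (simp add: mult_left_mono)
    also have "\<dots> < e"
    proof -
      have p: "0 < norm y + 1" by (smt (verit) norm_ge_zero)
      show ?thesis using \<open>dist x' x < _\<close> p by (simp add: dist_norm pos_less_divide_eq)
    qed
    finally show "dist (hs_inner x' y) (hs_inner x y) < e" .
  qed
qed

section \<open>Subspaces and spans\<close>

lemma csub_0: "csubspace S \<Longrightarrow> 0 \<in> S" by (simp add: csubspace_def)
lemma csub_add: "csubspace S \<Longrightarrow> x \<in> S \<Longrightarrow> y \<in> S \<Longrightarrow> x + y \<in> S" by (simp add: csubspace_def)
lemma csub_scale: "csubspace S \<Longrightarrow> x \<in> S \<Longrightarrow> c *\<^sub>C x \<in> S" by (simp add: csubspace_def)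
lemma csub_minus: "csubspace S \<Longrightarrow> x \<in> S \<Longrightarrow> - x \<in> S"
  using csub_scale[of S x "-1"] by (simp add: sC_minus_left)
lemma csub_diff: "csubspace S \<Longrightarrow> x \<in> S \<Longrightarrow> y \<in> S \<Longrightarrow> x - y \<in> S"
  using csub_add[of S x "-y"] csub_minus by fastforce
lemma csub_scaleR: "csubspace S \<Longrightarrow> x \<in> S \<Longrightarrow> r *\<^sub>R x \<in> S"
  using csub_scale[of S x "complex_of_real r"] by (simp add: sC_real)
lemma csub_sum: "csubspace S \<Longrightarrow> (\<And>i. i \<in> F \<Longrightarrow> f i \<in> S) \<Longrightarrow> sum f F \<in> S"
  by (induction F rule: infinite_finite_induct) (auto simp: csub_0 csub_add)

lemma cspan_csub: "csubspace (cspan S)"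
  unfolding csubspace_def
proof (intro conjI ballI allI)
  show "0 \<in> cspan S" unfolding cspan_def by (rule CollectI, rule exI[of _ "{}"]) auto
next
  fix x y assume "x \<in> cspan S" "y \<in> cspan S"
  then obtain F c G d where F: "finite F" "F \<subseteq> S" "x = (\<Sum>v\<in>F. c v *\<^sub>C v)"
    and G: "finite G" "G \<subseteq> S" "y = (\<Sum>v\<in>G. d v *\<^sub>C v)" unfolding cspan_def by blast
  define e where "e v = (if v \<in> F then c v else 0) + (if v \<in> G then d v else 0)" for v
  have "x = (\<Sum>v\<in>F\<union>G. (if v \<in> F then c v else 0) *\<^sub>C v)"
    unfolding F(3) by (rule sum.mono_neutral_cong_left) (use F G in auto)
  moreover have "y = (\<Sum>v\<in>F\<union>G. (if v \<in> G then d v else 0) *\<^sub>C v)"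
    unfolding G(3) by (rule sum.mono_neutral_cong_left) (use F G in auto)
  ultimately have "x + y = (\<Sum>v\<in>F\<union>G. e v *\<^sub>C v)"
    by (simp add: e_def sC_add_left sum.distrib)
  then show "x + y \<in> cspan S" unfolding cspan_def using F G by blast
next
  fix a x assume "x \<in> cspan S"
  then obtain F c where F: "finite F" "F \<subseteq> S" "x = (\<Sum>v\<in>F. c v *\<^sub>C v)" unfolding cspan_def by blast
  then have "a *\<^sub>C x = (\<Sum>v\<in>F. (a * c v) *\<^sub>C v)" by (simp add: sC_sum_right)
  then show "a *\<^sub>C x \<in> cspan S" unfolding cspan_def
    by (intro CollectI exI[of _ F] exI[of _ "\<lambda>v. a * c v"]) (use F in auto)
qed

lemma cspan_sup: "x \<in> S \<Longrightarrow> x \<in> cspan S"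
  unfolding cspan_def by (rule CollectI, rule exI[of _ "{x}"], rule exI[of _ "\<lambda>_. 1"]) auto

lemma cspan_least: "csubspace T \<Longrightarrow> S \<subseteq> T \<Longrightarrow> cspan S \<subseteq> T"
  unfolding cspan_def by (auto intro!: csub_sum csub_scale)

lemma cspan_mono: "S \<subseteq> T \<Longrightarrow> cspan S \<subseteq> cspan T"
  by (meson cspan_csub cspan_least cspan_sup order.trans subsetI)

section \<open>Orthonormal systems and projections\<close>

definition orthonormal :: "'a::chilbert set \<Rightarrow> bool" where
  "orthonormal E \<longleftrightarrow> (\<forall>e\<in>E. norm e = 1) \<and> (\<forall>e\<in>E. \<forall>e'\<in>E. e \<noteq> e' \<longrightarrow> hs_inner e e' = 0)"

definition proj :: "'a::chilbert set \<Rightarrow> 'a \<Rightarrow> 'a" where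
  "proj E w = (\<Sum>e\<in>E. hs_inner e w *\<^sub>C e)"

lemma proj_inner:
  assumes "finite E" "orthonormal E" "e \<in> E"
  shows "hs_inner e (proj E w) = hs_inner e w"
proof -
  have "hs_inner e (proj E w) = (\<Sum>e'\<in>E. hs_inner e' w * hs_inner e e')"
    by (simp add: proj_def ip_sum_right ip_scale_right)
  also have "\<dots> = (\<Sum>e'\<in>{e}. hs_inner e' w * hs_inner e e')"
    by (rule sum.mono_neutral_right) (use assms in \<open>auto simp: orthonormal_def\<close>)
  also have "\<dots> = hs_inner e w" using assms by (simp add: orthonormal_def ip_self)
  finally show ?thesis .
qed

lemma proj_orth:
  assumes "finite E" "orthonormal E" "e \<in> E"
  shows "hs_inner e (w - proj E w) = 0"
  using proj_inner[OF assms] by (simp add: ip_diff_right)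

lemma proj_in_span: "proj E w \<in> cspan E"
  unfolding proj_def by (rule csub_sum[OF cspan_csub], rule csub_scale[OF cspan_csub], rule cspan_sup)

lemma orth_span:
  assumes "\<forall>e\<in>E. hs_inner e u = 0" "y \<in> cspan E"
  shows "hs_inner y u = 0"
  using assms unfolding cspan_def by (auto simp: ip_sum_left ip_scale_left subset_iff)

lemma proj_id:
  assumes "finite E" "orthonormal E" "y \<in> cspan E"
  shows "proj E y = y"
proof -
  have "y - proj E y \<in> cspan E" by (rule csub_diff[OF cspan_csub assms(3) proj_in_span])
  moreover have "\<forall>e\<in>E. hs_inner e (y - proj E y) = 0" using proj_orth assms by blast
  ultimately have "hs_inner (y - proj E y) (y - proj E y) = 0" by (rule orth_span[rotated])
  then show ?thesis by (simp add: ip_self_zero)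
qed

lemma pyth: "hs_inner x y = 0 \<Longrightarrow> (norm ((x::'a::chilbert) + y))\<^sup>2 = (norm x)\<^sup>2 + (norm y)\<^sup>2"
  by (simp add: norm_add_sq)

lemma proj_norm:
  assumes "finite E" "orthonormal E"
  shows "norm (proj E w) \<le> norm w"
proof -
  have "hs_inner (proj E w) (w - proj E w) = 0"
    using orth_span[OF _ proj_in_span] proj_orth[OF assms] by blast
  then have "(norm w)\<^sup>2 = (norm (proj E w))\<^sup>2 + (norm (w - proj E w))\<^sup>2"
    using pyth[of "proj E w" "w - proj E w"] by simp
  then show ?thesis by (metis le_add_same_cancel1 power2_le_imp_le zero_le_power2 norm_ge_zero)
qed

lemma proj_add: "proj E (x + y) = proj E x + proj E y"
  by (simp add: proj_def ip_add_right sC_add_left sum.distrib)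
lemma proj_scale: "proj E (c *\<^sub>C x) = c *\<^sub>C proj E x"
  by (simp add: proj_def ip_scale_right sC_sum_right mult.commute)
lemma proj_diff: "proj E (x - y) = proj E x - proj E y"
  by (simp add: proj_def ip_diff_right sC_diff_left sum_subtractf)
lemma proj_zero_orth: "\<forall>e\<in>E. hs_inner e u = 0 \<Longrightarrow> proj E u = 0"
  by (simp add: proj_def)

lemma gram_schmidt:
  assumes "finite F"
  shows "\<exists>E. finite E \<and> orthonormal E \<and> E \<subseteq> cspan F \<and> F \<subseteq> cspan E"
  using assms
proof (induction F rule: finite_induct)
  case empty
  show ?case by (rule exI[of _ "{}"]) (auto simp: orthonormal_def)
next
  case (insert v F)
  then obtain E where E: "finite E" "orthonormal E" "E \<subseteq> cspan F" "F \<subseteq> cspan E" by blast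
  have spF: "cspan F \<subseteq> cspan (insert v F)" by (rule cspan_mono) auto
  define r where "r = v - proj E v"
  have rspan: "r \<in> cspan (insert v F)"
    unfolding r_def
  proof (rule csub_diff[OF cspan_csub])
    show "v \<in> cspan (insert v F)" by (rule cspan_sup) simp
    have "cspan E \<subseteq> cspan F" by (rule cspan_least[OF cspan_csub E(3)])
    then show "proj E v \<in> cspan (insert v F)" using proj_in_span spF by blast
  qed
  have rorth: "\<forall>e\<in>E. hs_inner e r = 0" unfolding r_def using proj_orth E by blast
  show ?case
  proof (cases "r = 0")
    case True
    then have "v \<in> cspan E" using proj_in_span[of E v] by (simp add: r_def)
    then show ?thesis using E spF by (intro exI[of _ E]) auto
  next
    case False
    define e0 where "e0 = complex_of_real (1 / norm r) *\<^sub>C r"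
    have ne0: "norm e0 = 1" using False by (simp add: e0_def norm_sC norm_divide)
    have e0orth: "\<forall>e\<in>E. hs_inner e e0 = 0" using rorth by (simp add: e0_def ip_scale_right)
    have e0orth': "\<forall>e\<in>E. hs_inner e0 e = 0" using e0orth by (metis ip_cnj complex_cnj_zero)
    have "e0 \<notin> E" using e0orth ne0 by (metis ip_self_zero norm_zero zero_neq_one)
    have onb: "orthonormal (insert e0 E)"
      using E(2) ne0 e0orth e0orth' unfolding orthonormal_def by auto
    have "e0 \<in> cspan (insert v F)" unfolding e0_def by (rule csub_scale[OF cspan_csub rspan])
    moreover have "E \<subseteq> cspan (insert v F)" using E(3) spF by blast
    moreover have "insert v F \<subseteq> cspan (insert e0 E)"
    proof -
      have sp: "cspan E \<subseteq> cspan (insert e0 E)" by (rule cspan_mono) auto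
      have "v = complex_of_real (norm r) *\<^sub>C e0 + proj E v"
        using False by (simp add: e0_def r_def)
      also have "\<dots> \<in> cspan (insert e0 E)"
        by (rule csub_add[OF cspan_csub csub_scale[OF cspan_csub cspan_sup]]) (use proj_in_span sp in auto)
      finally show ?thesis using E(4) sp by auto
    qed
    ultimately show ?thesis using onb E(1) by (intro exI[of _ "insert e0 E"]) auto
  qed
qed



lemma parallelogram:
  "(norm ((x::'a::chilbert) + y))\<^sup>2 + (norm (x - y))\<^sup>2 = 2 * (norm x)\<^sup>2 + 2 * (norm y)\<^sup>2"
  by (simp add: norm_add_sq norm_diff_sq)

lemma hilbert_proj:
  fixes R :: "'a::chilbert set"
  assumes R: "csubspace R" "closed R"
  shows "\<exists>r\<in>R. \<forall>s\<in>R. hs_inner s (u - r) = 0"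
proof -
  define d where "d = Inf ((\<lambda>s. norm (u - s)) ` R)"
  have ne: "(\<lambda>s. norm (u - s)) ` R \<noteq> {}" using csub_0[OF R(1)] by blast
  have bdd: "bdd_below ((\<lambda>s. norm (u - s)) ` R)" by (rule bdd_belowI[of _ 0]) auto
  have dle: "d \<le> norm (u - s)" if "s \<in> R" for s
    unfolding d_def by (rule cInf_lower[OF _ bdd]) (use that in auto)
  have d0: "d \<ge> 0" unfolding d_def by (rule cInf_greatest[OF ne]) auto
  have "\<exists>s\<in>R. norm (u - s) < d + 1 / (real n + 1)" for n
  proof -
    have "Inf ((\<lambda>s. norm (u - s)) ` R) < d + 1 / (real n + 1)" unfolding d_def by simp
    then show ?thesis using cInf_lessD[OF ne] by blast
  qed
  then obtain s where s: "\<And>n. s n \<in> R" "\<And>n. norm (u - s n) < d + 1 / (real n + 1)" by metis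
  define c where "c = 2 * d + 1"
  have sq: "(norm (u - s n))\<^sup>2 \<le> d\<^sup>2 + c / (real n + 1)" for n
  proof -
    have a: "norm (u - s n) \<le> d + 1 / (real n + 1)" using s(2)[of n] by simp
    have "(norm (u - s n))\<^sup>2 \<le> (d + 1 / (real n + 1))\<^sup>2"
      using a by (simp add: power_mono)
    also have "\<dots> = d\<^sup>2 + (2*d) / (real n + 1) + (1 / (real n + 1))\<^sup>2"
      by (simp add: power2_sum)
    also have "(1 / (real n + 1))\<^sup>2 \<le> 1 / (real n + 1)"
      by (simp add: power2_eq_square frac_le)
    finally show ?thesis by (simp add: c_def add_divide_distrib)
  qed
  have mid: "(norm (s n - s m))\<^sup>2 \<le> 2 * c / (real n + 1) + 2 * c / (real m + 1)" for n m
  proof -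
    have mR: "(1/2) *\<^sub>R (s n + s m) \<in> R" using s(1) R(1) by (simp add: csub_scaleR csub_add)
    have "(u - s n) + (u - s m) = 2 *\<^sub>R (u - (1/2) *\<^sub>R (s n + s m))" by (simp add: algebra_simps scaleR_2)
    then have "(norm ((u - s n) + (u - s m)))\<^sup>2 = 4 * (norm (u - (1/2) *\<^sub>R (s n + s m)))\<^sup>2"
      by (simp add: power_mult_distrib)
    moreover have "d\<^sup>2 \<le> (norm (u - (1/2) *\<^sub>R (s n + s m)))\<^sup>2"
      using dle[OF mR] d0 by (simp add: power_mono)
    moreover have "(u - s n) - (u - s m) = s m - s n" by simp
    moreover note parallelogram[of "u - s n" "u - s m"] sq[of n] sq[of m]
    ultimately have "(norm (s m - s n))\<^sup>2 \<le> 2 * c / (real n + 1) + 2 * c / (real m + 1)" by simp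
    then show ?thesis by (simp add: norm_minus_commute)
  qed
  have c0: "c > 0" using d0 by (simp add: c_def)
  have "Cauchy s"
  proof (rule metric_CauchyI)
    fix e :: real assume e: "e > 0"
    obtain N :: nat where N: "real N > 4 * c / e\<^sup>2" using reals_Archimedean2 by blast
    show "\<exists>M. \<forall>m\<ge>M. \<forall>n\<ge>M. dist (s m) (s n) < e"
    proof (intro exI[of _ N] allI impI)
      fix m n assume mn: "m \<ge> N" "n \<ge> N"
      have e2: "e\<^sup>2 > 0" using e by simp
      have "2 * c / (real n + 1) \<le> 2 * c / (real N + 1)" using mn c0
        by (intro divide_left_mono) auto
      moreover have "2 * c / (real m + 1) \<le> 2 * c / (real N + 1)" using mn c0
        by (intro divide_left_mono) auto
      moreover have "4 * c / (real N + 1) < e\<^sup>2"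
      proof -
        have "4 * c < e\<^sup>2 * real N" using N e2 by (simp add: pos_divide_less_eq mult.commute)
        then have "4 * c < e\<^sup>2 * (real N + 1)" using e2 by (smt (verit) mult_left_mono)
        then show ?thesis by (simp add: pos_divide_less_eq)
      qed
      ultimately have "(norm (s n - s m))\<^sup>2 < e\<^sup>2" using mid[of n m] by simp
      then show "dist (s m) (s n) < e" using e
        by (simp add: dist_norm norm_minus_commute power_less_imp_less_base)
    qed
  qed
  then obtain r where r: "s \<longlonglongrightarrow> r" using Cauchy_convergent_iff convergent_def by blast
  have rR: "r \<in> R" using closed_sequentially[OF R(2) _ r] s(1) by blast
  have "(\<lambda>n. norm (u - s n)) \<longlonglongrightarrow> norm (u - r)" by (intro tendsto_intros r)
  moreover have "(\<lambda>n. d + 1 / (real n + 1)) \<longlonglongrightarrow> d + 0"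
  proof (intro tendsto_intros)
    show "(\<lambda>n. 1 / (real n + 1)) \<longlonglongrightarrow> 0"
      using LIMSEQ_inverse_real_of_nat by (simp add: inverse_eq_divide add.commute)
  qed
  ultimately have "norm (u - r) \<le> d + 0"
    by (rule LIMSEQ_le) (use s(2) less_imp_le in blast)
  then have dr: "norm (u - r) = d" using dle[OF rR] by simp
  show ?thesis
  proof (intro bexI[OF _ rR] ballI)
    fix t assume tR: "t \<in> R"
    define v where "v = u - r"
    define q where "q = hs_inner t v"
    show "hs_inner t (u - r) = 0"
    proof (rule ccontr)
      assume "hs_inner t (u - r) \<noteq> 0"
      then have q0: "q \<noteq> 0" by (simp add: q_def v_def)
      define k where "k = 1 / ((norm t)\<^sup>2 + 1)"
      have k0: "k > 0" unfolding k_def by (smt (verit) divide_pos_pos zero_le_power2)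
      have "r + (complex_of_real k * q) *\<^sub>C t \<in> R" using rR tR R(1) by (simp add: csub_add csub_scale)
      then have "d \<le> norm (v - (complex_of_real k * q) *\<^sub>C t)" using dle by (simp add: v_def diff_diff_add)
      then have "(norm v)\<^sup>2 \<le> (norm (v - (complex_of_real k * q) *\<^sub>C t))\<^sup>2"
        using dr d0 by (simp add: v_def power_mono)
      also have "\<dots> = (norm v)\<^sup>2 + (k * cmod q * norm t)\<^sup>2 - 2 * Re (hs_inner v ((complex_of_real k * q) *\<^sub>C t))"
        using k0 by (simp add: norm_diff_sq norm_sC norm_mult)
      also have "Re (hs_inner v ((complex_of_real k * q) *\<^sub>C t)) = k * (cmod q)\<^sup>2"
      proof -
        have "hs_inner v t = cnj q" by (simp add: q_def ip_cnj)
        then have "hs_inner v ((complex_of_real k * q) *\<^sub>C t) = complex_of_real k * (q * cnj q)"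
          by (simp add: ip_scale_right)
        then show ?thesis by (simp add: complex_norm_square[symmetric])
      qed
      finally have "2 * k * (cmod q)\<^sup>2 \<le> k\<^sup>2 * (cmod q)\<^sup>2 * (norm t)\<^sup>2"
        by (simp add: power_mult_distrib)
      then have "2 \<le> k * (norm t)\<^sup>2" using q0 k0 by (simp add: power2_eq_square)
      moreover have "k * (norm t)\<^sup>2 < 1"
      proof -
        have p: "(norm t)\<^sup>2 + 1 > 0" by (smt (verit) zero_le_power2)
        then show ?thesis by (simp add: k_def pos_divide_less_eq)
      qed
      ultimately show False by simp
    qed
  qed
qed

lemma unitary_Re:
  assumes "unitary U"
  shows "Re (hs_inner (U x) (U y)) = Re (hs_inner x (y::'a::chilbert))"
proof -
  have lin: "U (x + y) = U x + U y" using assms by (simp add: unitary_def clinear_on_def)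
  have n: "\<And>z. norm (U z) = norm z" using assms by (simp add: unitary_def)
  show ?thesis using norm_add_sq[of "U x" "U y"] norm_add_sq[of x y] by (simp add: n lin[symmetric])
qed

lemma unitary_ip:
  assumes "unitary U"
  shows "hs_inner (U x) (U y) = hs_inner x (y::'a::chilbert)"
proof -
  have sc: "U (c *\<^sub>C z) = c *\<^sub>C U z" for c z using assms by (simp add: unitary_def clinear_on_def)
  have "Re (hs_inner (U x) (U ((-\<i>) *\<^sub>C y))) = Re (hs_inner x ((-\<i>) *\<^sub>C y))" by (rule unitary_Re[OF assms])
  then have "Im (hs_inner (U x) (U y)) = Im (hs_inner x y)" by (simp add: sc ip_scale_right)
  then show ?thesis using unitary_Re[OF assms, of x y] by (simp add: complex_eq_iff)
qed



locale opset =
  fixes D :: "'a::chilbert set" and A :: "'a \<Rightarrow> 'a"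
  assumes lin: "lin_op D A" and dense: "densely_defined D" and clo: "closed_op D A"
    and sym: "symmetric_op D A"
    and fdp: "finite_dim (Nplus D A)" and fdm: "finite_dim (Nminus D A)"
begin

abbreviation "Np \<equiv> Nplus D A"
abbreviation "Nm \<equiv> Nminus D A"

definition ar :: "'a \<Rightarrow> 'a \<Rightarrow> bool" where
  "ar y z \<longleftrightarrow> (\<forall>x\<in>D. hs_inner (A x) y = hs_inner x z)"

lemma Dsub: "csubspace D" using lin by (simp add: lin_op_def)
lemma A_add: "x \<in> D \<Longrightarrow> y \<in> D \<Longrightarrow> A (x + y) = A x + A y"
  using lin by (simp add: lin_op_def clinear_on_def)
lemma A_scale: "x \<in> D \<Longrightarrow> A (c *\<^sub>C x) = c *\<^sub>C A x"
  using lin by (simp add: lin_op_def clinear_on_def)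
lemma A_minus: "x \<in> D \<Longrightarrow> A (- x) = - A x"
  using A_scale[of x "-1"] by (simp add: sC_minus_left)
lemma A_diff: "x \<in> D \<Longrightarrow> y \<in> D \<Longrightarrow> A (x - y) = A x - A y"
  using A_add[of x "-y"] A_minus[of y] csub_minus[OF Dsub] by simp
lemma A_zero: "A 0 = 0"
  using A_scale[of 0 0] csub_0[OF Dsub] by simp
lemma symD: assumes "x \<in> D" "y \<in> D" shows "hs_inner (A x) y = hs_inner x (A y)"
proof -
  have h: "\<forall>x\<in>D. \<forall>y\<in>D. hs_inner (A x) y = hs_inner x (A y)"
    using sym by (simp only: symmetric_op_def)
  show ?thesis using bspec[OF bspec[OF h assms(1)] assms(2)] .
qed

lemma ar_unique: "ar y z \<Longrightarrow> ar y z' \<Longrightarrow> z = z'"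
proof -
  assume "ar y z" "ar y z'"
  then have "\<forall>x\<in>D. hs_inner x (z - z') = 0"
    unfolding ar_def ip_diff_right by simp
  moreover have "closure D = UNIV" using dense by (simp add: densely_defined_def)
  ultimately have "z - z' = 0" by (rule dense_orth_zero[rotated])
  then show ?thesis by simp
qed

lemma adj_eq: assumes "ar y z" shows "adj D A y = z"
  unfolding adj_def
proof (rule the_equality)
  show "\<forall>x\<in>D. hs_inner (A x) y = hs_inner x z" using assms by (simp add: ar_def)
  fix z' assume "\<forall>x\<in>D. hs_inner (A x) y = hs_inner x z'"
  then have "ar y z'" by (simp add: ar_def)
  then show "z' = z" using ar_unique assms by blast
qed

lemma ar_adj_dom: "ar y z \<Longrightarrow> y \<in> adj_dom D A"
  unfolding adj_dom_def ar_def by (rule CollectI, rule exI)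

lemma adj_dom_ar: "y \<in> adj_dom D A \<Longrightarrow> ar y (adj D A y)"
proof -
  assume "y \<in> adj_dom D A"
  then obtain z where "ar y z" unfolding adj_dom_def ar_def by (elim CollectE exE)
  then show ?thesis using adj_eq by simp
qed

lemma defi_iff: "y \<in> deficiency D A s \<longleftrightarrow> ar y ((s * \<i>) *\<^sub>C y)"
proof
  assume "y \<in> deficiency D A s"
  then show "ar y ((s * \<i>) *\<^sub>C y)" unfolding deficiency_def using adj_dom_ar by force
next
  assume "ar y ((s * \<i>) *\<^sub>C y)"
  then show "y \<in> deficiency D A s" unfolding deficiency_def using adj_eq ar_adj_dom by blast
qed

lemma Np_ar: "y \<in> Np \<longleftrightarrow> ar y (\<i> *\<^sub>C y)" using defi_iff[of y 1] by simp
lemma Nm_ar: "y \<in> Nm \<longleftrightarrow> ar y ((-\<i>) *\<^sub>C y)" using defi_iff[of y "-1"] by simp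

lemma Np_orth: "y \<in> Np \<longleftrightarrow> (\<forall>x\<in>D. hs_inner (A x + \<i> *\<^sub>C x) y = 0)"
proof -
  have "\<And>x. hs_inner (A x + \<i> *\<^sub>C x) y = hs_inner (A x) y - \<i> * hs_inner x y"
    by (simp add: ip_add_left ip_scale_left)
  then show ?thesis unfolding Np_ar ar_def by (simp add: ip_scale_right)
qed
lemma Nm_orth: "y \<in> Nm \<longleftrightarrow> (\<forall>x\<in>D. hs_inner (A x - \<i> *\<^sub>C x) y = 0)"
proof -
  have "\<And>x. hs_inner (A x - \<i> *\<^sub>C x) y = hs_inner (A x) y - (- \<i>) * hs_inner x y"
    by (simp add: ip_diff_left ip_scale_left)
  then show ?thesis unfolding Nm_ar ar_def by (simp only: ip_scale_right right_minus_eq)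
qed

lemma ar_add: "ar y z \<Longrightarrow> ar y' z' \<Longrightarrow> ar (y + y') (z + z')"
  by (simp add: ar_def ip_add_right)
lemma ar_scale: "ar y z \<Longrightarrow> ar (c *\<^sub>C y) (c *\<^sub>C z)"
  by (simp add: ar_def ip_scale_right)
lemma ar_scaleR: "ar y z \<Longrightarrow> ar (r *\<^sub>R y) (r *\<^sub>R z)"
  using ar_scale[of y z "complex_of_real r"] by (simp add: sC_real)
lemma ar_minus: "ar y z \<Longrightarrow> ar (- y) (- z)"
  by (simp add: ar_def ip_minus_right)
lemma ar_diff: "ar y z \<Longrightarrow> ar y' z' \<Longrightarrow> ar (y - y') (z - z')"
  by (simp add: ar_def ip_diff_right)
lemma ar_zero: "ar 0 0" by (simp add: ar_def)
lemma ar_D: "x \<in> D \<Longrightarrow> ar x (A x)" by (simp add: ar_def symD)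

lemma Np_csub: "csubspace Np"
  unfolding csubspace_def
proof (intro conjI ballI allI)
  show "0 \<in> Np" unfolding Np_ar using ar_zero by simp
  fix x y assume "x \<in> Np" "y \<in> Np"
  then show "x + y \<in> Np" unfolding Np_ar using ar_add by (simp add: sC_add_right)
next
  fix c x assume "x \<in> Np"
  then have "ar (c *\<^sub>C x) (c *\<^sub>C (\<i> *\<^sub>C x))" unfolding Np_ar by (rule ar_scale)
  then show "c *\<^sub>C x \<in> Np" unfolding Np_ar by (simp add: mult.commute)
qed

lemma Nm_csub: "csubspace Nm"
  unfolding csubspace_def
proof (intro conjI ballI allI)
  show "0 \<in> Nm" unfolding Nm_ar using ar_zero by simp
  fix x y assume "x \<in> Nm" "y \<in> Nm"
  then show "x + y \<in> Nm" unfolding Nm_ar using ar_add by (simp add: sC_add_right)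
next
  fix c x assume "x \<in> Nm"
  then have "ar (c *\<^sub>C x) (c *\<^sub>C ((-\<i>) *\<^sub>C x))" unfolding Nm_ar by (rule ar_scale)
  then show "c *\<^sub>C x \<in> Nm" unfolding Nm_ar by (simp add: mult.commute)
qed

end


lemma onb_exists:
  assumes "csubspace N" "finite_dim N"
  shows "\<exists>E. finite E \<and> orthonormal E \<and> cspan E = N"
proof -
  obtain F where F: "finite F" "F \<subseteq> N" "N \<subseteq> cspan F" using assms(2) by (auto simp: finite_dim_def)
  obtain E where E: "finite E" "orthonormal E" "E \<subseteq> cspan F" "F \<subseteq> cspan E"
    using gram_schmidt[OF F(1)] by blast
  have "cspan F \<subseteq> N" by (rule cspan_least[OF assms(1) F(2)])
  then have "cspan E \<subseteq> N" using E(3) cspan_least[OF assms(1)] by blast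
  moreover have "N \<subseteq> cspan E" using F(3) cspan_least[OF cspan_csub E(4)] by blast
  ultimately show ?thesis using E by blast
qed

lemma sC_tendsto:
  assumes "X \<longlonglongrightarrow> x"
  shows "(\<lambda>n. c *\<^sub>C (X n :: 'a::chilbert)) \<longlonglongrightarrow> c *\<^sub>C x"
proof -
  have "(\<lambda>n. norm (X n - x)) \<longlonglongrightarrow> 0" using assms by (simp add: tendsto_norm_zero_iff LIM_zero)
  then have "(\<lambda>n. cmod c * norm (X n - x)) \<longlonglongrightarrow> 0" by (simp add: tendsto_mult_right_zero)
  then have "(\<lambda>n. norm (c *\<^sub>C X n - c *\<^sub>C x)) \<longlonglongrightarrow> 0" by (simp add: norm_sC sC_diff_right[symmetric])
  then show ?thesis by (simp add: tendsto_norm_zero_iff LIM_zero_cancel)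
qed

lemma Cauchy_dom:
  assumes "Cauchy y" "\<And>n m. dist (x n) (x m) \<le> dist (y n) (y m)"
  shows "Cauchy x"
  unfolding Cauchy_def
proof (intro allI impI)
  fix e :: real assume "e > 0"
  then obtain M where M: "\<forall>m\<ge>M. \<forall>n\<ge>M. dist (y m) (y n) < e" using assms(1) unfolding Cauchy_def by blast
  show "\<exists>M. \<forall>m\<ge>M. \<forall>n\<ge>M. dist (x m) (x n) < e"
    by (rule exI[of _ M]) (use M assms(2) le_less_trans in blast)
qed

lemma sC_double: "c *\<^sub>C x + c *\<^sub>C x = (2 * c) *\<^sub>C (x::'a::chilbert)"
proof -
  have "(2 * c) *\<^sub>C x = (c + c) *\<^sub>C x" by (simp only: mult_2)
  then show ?thesis by (simp only: sC_add_left)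
qed

context opset begin

definition Ep where "Ep = (SOME E. finite E \<and> orthonormal E \<and> cspan E = Np)"
definition Em where "Em = (SOME E. finite E \<and> orthonormal E \<and> cspan E = Nm)"

lemma Ep: "finite Ep" "orthonormal Ep" "cspan Ep = Np"
  using someI_ex[OF onb_exists[OF Np_csub fdp]] unfolding Ep_def by blast+
lemma Em: "finite Em" "orthonormal Em" "cspan Em = Nm"
  using someI_ex[OF onb_exists[OF Nm_csub fdm]] unfolding Em_def by blast+

abbreviation "Pp \<equiv> proj Ep"
abbreviation "Pm \<equiv> proj Em"

lemma Pp_in: "Pp w \<in> Np" using proj_in_span Ep by blast
lemma Pm_in: "Pm w \<in> Nm" using proj_in_span Em by blast
lemma Pp_id: "y \<in> Np \<Longrightarrow> Pp y = y" using proj_id Ep by blast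
lemma Pm_id: "y \<in> Nm \<Longrightarrow> Pm y = y" using proj_id Em by blast
lemma Pp_norm: "norm (Pp w) \<le> norm w" using proj_norm Ep by blast
lemma Pm_norm: "norm (Pm w) \<le> norm w" using proj_norm Em by blast

lemma Ep_sub: "e \<in> Ep \<Longrightarrow> e \<in> Np" using Ep(3) cspan_sup by blast
lemma Em_sub: "e \<in> Em \<Longrightarrow> e \<in> Nm" using Em(3) cspan_sup by blast

lemma Pp_kill: "x \<in> D \<Longrightarrow> Pp (A x + \<i> *\<^sub>C x) = 0"
proof (rule proj_zero_orth, intro ballI)
  fix e assume x: "x \<in> D" and "e \<in> Ep"
  from \<open>e \<in> Ep\<close> have "e \<in> Np" by (rule Ep_sub)
  then have "hs_inner (A x + \<i> *\<^sub>C x) e = 0" using x Np_orth by blast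
  then show "hs_inner e (A x + \<i> *\<^sub>C x) = 0" by (metis ip_cnj complex_cnj_zero)
qed
lemma Pm_kill: "x \<in> D \<Longrightarrow> Pm (A x - \<i> *\<^sub>C x) = 0"
proof (rule proj_zero_orth, intro ballI)
  fix e assume x: "x \<in> D" and "e \<in> Em"
  from \<open>e \<in> Em\<close> have "e \<in> Nm" by (rule Em_sub)
  then have "hs_inner (A x - \<i> *\<^sub>C x) e = 0" using x Nm_orth by blast
  then show "hs_inner e (A x - \<i> *\<^sub>C x) = 0" by (metis ip_cnj complex_cnj_zero)
qed

lemma Pp_orth: "v \<in> Np \<Longrightarrow> hs_inner v (w - Pp w) = 0"
  using orth_span[of Ep "w - Pp w" v] proj_orth[OF Ep(1,2)] Ep(3) by blast

lemma Axx_real: "x \<in> D \<Longrightarrow> Im (hs_inner (A x) x) = 0"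
  using symD[of x x] ip_Im_sym[of "A x" x] by simp

lemma norm_Ac: assumes "x \<in> D" "Re c = 0" "cmod c = 1"
  shows "(norm (A x + c *\<^sub>C x))\<^sup>2 = (norm (A x))\<^sup>2 + (norm x)\<^sup>2"
proof -
  have "Re (hs_inner (A x) (c *\<^sub>C x)) = Re (c * hs_inner (A x) x)" by (simp add: ip_scale_right)
  also have "\<dots> = 0" using assms Axx_real[OF assms(1)] by simp
  finally show ?thesis by (simp add: norm_add_sq norm_sC assms)
qed

definition Rg :: "complex \<Rightarrow> 'a set" where "Rg c = {A x + c *\<^sub>C x | x. x \<in> D}"

lemma Rg_csub: "csubspace (Rg c)"
  unfolding csubspace_def Rg_def
proof (intro conjI ballI allI)
  show "0 \<in> {A x + c *\<^sub>C x |x. x \<in> D}" using csub_0[OF Dsub] A_zero by force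
next
  fix u v assume "u \<in> {A x + c *\<^sub>C x |x. x \<in> D}" "v \<in> {A x + c *\<^sub>C x |x. x \<in> D}"
  then obtain x y where "x \<in> D" "y \<in> D" "u = A x + c *\<^sub>C x" "v = A y + c *\<^sub>C y" by blast
  then have "u + v = A (x + y) + c *\<^sub>C (x + y)" "x + y \<in> D"
    by (simp_all add: A_add sC_add_right csub_add[OF Dsub] algebra_simps)
  then show "u + v \<in> {A x + c *\<^sub>C x |x. x \<in> D}" by blast
next
  fix d u assume "u \<in> {A x + c *\<^sub>C x |x. x \<in> D}"
  then obtain x where "x \<in> D" "u = A x + c *\<^sub>C x" by blast
  then have "d *\<^sub>C u = A (d *\<^sub>C x) + c *\<^sub>C (d *\<^sub>C x)" "d *\<^sub>C x \<in> D"
    by (simp_all add: A_scale sC_add_right csub_scale[OF Dsub] mult.commute)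
  then show "d *\<^sub>C u \<in> {A x + c *\<^sub>C x |x. x \<in> D}" by blast
qed

lemma graph_closed: "closed {(x, A x) | x. x \<in> D}"
  using clo by (simp add: closed_op_def)

lemma Rg_closed: assumes c: "Re c = 0" "cmod c = 1" shows "closed (Rg c)"
proof (rule closed_sequential_limits[THEN iffD2], intro allI impI, elim conjE)
  fix y l assume y: "\<forall>n. y n \<in> Rg c" and l: "y \<longlonglongrightarrow> l"
  then have "\<forall>n. \<exists>x. x \<in> D \<and> y n = A x + c *\<^sub>C x" by (auto simp: Rg_def)
  then obtain x where x: "\<forall>n. x n \<in> D \<and> y n = A (x n) + c *\<^sub>C (x n)" by (rule choice[THEN exE])
  have xD: "x n \<in> D" for n using x by blast
  have yx: "y n = A (x n) + c *\<^sub>C (x n)" for n using x by blast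
  have diff: "y n - y m = A (x n - x m) + c *\<^sub>C (x n - x m)" for n m
  proof -
    have "A (x n - x m) + c *\<^sub>C (x n - x m) = (A (x n) - A (x m)) + (c *\<^sub>C x n - c *\<^sub>C x m)"
      by (simp only: A_diff[OF xD xD] sC_diff_right)
    also have "\<dots> = y n - y m" by (simp only: yx) (simp add: algebra_simps)
    finally show ?thesis by simp
  qed
  have xd: "x n - x m \<in> D" for n m using xD csub_diff[OF Dsub] by blast
  have ineq: "(norm (A (x n - x m)))\<^sup>2 + (norm (x n - x m))\<^sup>2 = (norm (y n - y m))\<^sup>2" for n m
    using norm_Ac[OF xd c, of n m] diff[of n m] by simp
  have "Cauchy y" using l by (rule LIMSEQ_imp_Cauchy)
  have c1: "Cauchy x"
  proof (rule Cauchy_dom[OF \<open>Cauchy y\<close>])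
    fix n m
    have "(norm (x n - x m))\<^sup>2 \<le> (norm (y n - y m))\<^sup>2" using ineq[of n m] zero_le_power2[of "norm (A (x n - x m))"] by linarith
    then show "dist (x n) (x m) \<le> dist (y n) (y m)" unfolding dist_norm by (rule power2_le_imp_le) simp
  qed
  have c2: "Cauchy (\<lambda>n. A (x n))"
  proof (rule Cauchy_dom[OF \<open>Cauchy y\<close>])
    fix n m
    have "(norm (A (x n - x m)))\<^sup>2 \<le> (norm (y n - y m))\<^sup>2" using ineq[of n m] zero_le_power2[of "norm (x n - x m)"] by linarith
    then have "norm (A (x n - x m)) \<le> norm (y n - y m)" by (rule power2_le_imp_le) simp
    then show "dist (A (x n)) (A (x m)) \<le> dist (y n) (y m)" unfolding dist_norm by (simp only: A_diff[OF xD xD])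
  qed
  obtain x0 where x0: "x \<longlonglongrightarrow> x0" using c1 Cauchy_convergent_iff convergent_def by blast
  obtain z0 where z0: "(\<lambda>n. A (x n)) \<longlonglongrightarrow> z0" using c2 Cauchy_convergent_iff convergent_def by blast
  have tp: "(\<lambda>n. (x n, A (x n))) \<longlonglongrightarrow> (x0, z0)" using x0 z0 by (rule tendsto_Pair)
  have inG: "\<forall>n. (x n, A (x n)) \<in> {(u, A u) | u. u \<in> D}"
  proof
    fix n show "(x n, A (x n)) \<in> {(u, A u) | u. u \<in> D}"
      by (rule CollectI, rule exI[of _ "x n"]) (simp add: xD)
  qed
  have "(x0, z0) \<in> {(u, A u) | u. u \<in> D}"
    by (rule closed_sequentially[OF graph_closed, of "\<lambda>n. (x n, A (x n))"]) (use inG tp in auto)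
  then obtain x1 where "(x0, z0) = (x1, A x1)" "x1 \<in> D" by blast
  then have x0D: "x0 \<in> D" and z0A: "z0 = A x0" by auto
  have "(\<lambda>n. A (x n) + c *\<^sub>C (x n)) \<longlonglongrightarrow> z0 + c *\<^sub>C x0" by (intro tendsto_add z0 sC_tendsto x0)
  moreover have "y = (\<lambda>n. A (x n) + c *\<^sub>C (x n))" by (rule ext) (rule yx)
  ultimately have "y \<longlonglongrightarrow> z0 + c *\<^sub>C x0" by simp
  then have "l = z0 + c *\<^sub>C x0" by (rule LIMSEQ_unique[OF l])
  then show "l \<in> Rg c" using x0D z0A unfolding Rg_def by blast
qed

lemma decomp_Rp: "\<exists>x\<in>D. w = (A x + \<i> *\<^sub>C x) + Pp w"
proof -
  obtain r where r: "r \<in> Rg \<i>" "\<forall>s\<in>Rg \<i>. hs_inner s ((w - Pp w) - r) = 0"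
    using hilbert_proj[OF Rg_csub Rg_closed, of \<i> "w - Pp w"] by auto
  define v where "v = (w - Pp w) - r"
  have "v \<in> Np" unfolding Np_orth using r(2) by (auto simp: Rg_def v_def)
  then have "hs_inner v (w - Pp w) = 0" by (rule Pp_orth)
  moreover have "hs_inner v r = 0" using r by (metis ip_cnj complex_cnj_zero v_def)
  ultimately have "hs_inner v v = 0" by (simp add: v_def ip_diff_right)
  then have "w - Pp w = r" by (simp add: ip_self_zero v_def)
  then show ?thesis using r(1) by (auto simp: Rg_def algebra_simps)
qed

end


context opset begin

definition pc :: "'a \<Rightarrow> 'a" where "pc h = (-\<i>/2) *\<^sub>C Pp (adj D A h + \<i> *\<^sub>C h)"
definition mc :: "'a \<Rightarrow> 'a" where "mc h = (\<i>/2) *\<^sub>C Pm (adj D A h - \<i> *\<^sub>C h)"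

lemma ar_sum:
  assumes "x \<in> D" "p \<in> Np" "m \<in> Nm"
  shows "ar (x + p + m) (A x + \<i> *\<^sub>C p - \<i> *\<^sub>C m)"
proof -
  have "ar (x + p + m) (A x + \<i> *\<^sub>C p + (-\<i>) *\<^sub>C m)"
    by (intro ar_add ar_D assms(1)) (use assms(2,3) Np_ar Nm_ar in auto)
  then show ?thesis by (simp add: sC_minus_left)
qed

lemma comp:
  assumes "x \<in> D" "p \<in> Np" "m \<in> Nm"
  shows "pc (x + p + m) = p" "mc (x + p + m) = m"
proof -
  have adj: "adj D A (x + p + m) = A x + \<i> *\<^sub>C p - \<i> *\<^sub>C m"
    by (rule adj_eq[OF ar_sum[OF assms]])
  have "adj D A (x + p + m) + \<i> *\<^sub>C (x + p + m) = (A x + \<i> *\<^sub>C x) + (\<i> *\<^sub>C p + \<i> *\<^sub>C p)"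
    unfolding adj by (simp add: sC_add_right algebra_simps)
  also have "\<dots> = (A x + \<i> *\<^sub>C x) + (2 * \<i>) *\<^sub>C p" by (simp only: sC_double)
  finally have eq: "adj D A (x + p + m) + \<i> *\<^sub>C (x + p + m) = (A x + \<i> *\<^sub>C x) + (2 * \<i>) *\<^sub>C p" .
  have "Pp (adj D A (x + p + m) + \<i> *\<^sub>C (x + p + m)) = Pp (A x + \<i> *\<^sub>C x) + Pp ((2 * \<i>) *\<^sub>C p)"
    unfolding eq by (rule proj_add)
  also have "\<dots> = (2 * \<i>) *\<^sub>C p"
    by (simp only: proj_scale Pp_kill[OF assms(1)] Pp_id[OF assms(2)] add_0_left)
  finally have "Pp (adj D A (x + p + m) + \<i> *\<^sub>C (x + p + m)) = (2 * \<i>) *\<^sub>C p" .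
  then show "pc (x + p + m) = p" by (simp add: pc_def)
  have "adj D A (x + p + m) - \<i> *\<^sub>C (x + p + m) = (A x - \<i> *\<^sub>C x) + ((-\<i>) *\<^sub>C m + (-\<i>) *\<^sub>C m)"
    unfolding adj by (simp add: sC_add_right sC_minus_left algebra_simps)
  also have "\<dots> = (A x - \<i> *\<^sub>C x) + (2 * (-\<i>)) *\<^sub>C m" by (simp only: sC_double)
  finally have eq2: "adj D A (x + p + m) - \<i> *\<^sub>C (x + p + m) = (A x - \<i> *\<^sub>C x) + (2 * (-\<i>)) *\<^sub>C m" .
  have "Pm (adj D A (x + p + m) - \<i> *\<^sub>C (x + p + m)) = Pm (A x - \<i> *\<^sub>C x) + Pm ((2 * (-\<i>)) *\<^sub>C m)"
    unfolding eq2 by (rule proj_add)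
  also have "\<dots> = (2 * (-\<i>)) *\<^sub>C m"
    by (simp only: proj_scale Pm_kill[OF assms(1)] Pm_id[OF assms(3)] add_0_left)
  finally have "Pm (adj D A (x + p + m) - \<i> *\<^sub>C (x + p + m)) = (2 * (-\<i>)) *\<^sub>C m" .
  then show "mc (x + p + m) = m" by (simp add: mc_def)
qed

lemma pc_in: "pc h \<in> Np" unfolding pc_def by (rule csub_scale[OF Np_csub Pp_in])
lemma mc_in: "mc h \<in> Nm" unfolding mc_def by (rule csub_scale[OF Nm_csub Pm_in])

lemma decomp:
  assumes h: "h \<in> adj_dom D A"
  shows "\<exists>x\<in>D. h = x + pc h + mc h"
proof -
  define z where "z = adj D A h"
  have arh: "ar h z" unfolding z_def by (rule adj_dom_ar[OF h])
  define w where "w = z + \<i> *\<^sub>C h"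
  obtain x0 where x0: "x0 \<in> D" "w = (A x0 + \<i> *\<^sub>C x0) + Pp w" using decomp_Rp by blast
  define p where "p = pc h"
  have pw: "p = (-\<i>/2) *\<^sub>C Pp w" by (simp add: p_def pc_def w_def z_def)
  have Ppw: "Pp w = \<i> *\<^sub>C p + \<i> *\<^sub>C p"
    by (simp only: sC_double) (simp add: pw)
  have pN: "p \<in> Np" unfolding p_def by (rule pc_in)
  define m where "m = h - x0 - p"
  have w2: "w = (A x0 + \<i> *\<^sub>C x0) + (\<i> *\<^sub>C p + \<i> *\<^sub>C p)"
    using x0(2) by (simp only: Ppw)
  have z: "z = A x0 + \<i> *\<^sub>C x0 + (\<i> *\<^sub>C p + \<i> *\<^sub>C p) - \<i> *\<^sub>C h"
    using w2 unfolding w_def by (simp only: eq_diff_eq)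
  have "ar m (z - A x0 - \<i> *\<^sub>C p)" unfolding m_def
    by (intro ar_diff arh ar_D x0(1)) (use pN Np_ar in blast)
  moreover have "z - A x0 - \<i> *\<^sub>C p = (-\<i>) *\<^sub>C m"
    unfolding z m_def by (simp add: sC_diff_right sC_minus_left sC_add_right algebra_simps)
  ultimately have mN: "m \<in> Nm" unfolding Nm_ar by simp
  have hx: "h = x0 + p + m" by (simp add: m_def)
  have "mc h = m" using comp(2)[OF x0(1) pN mN] hx by simp
  then show ?thesis using hx x0(1) p_def by blast
qed

lemma decomp_unique:
  assumes "h \<in> adj_dom D A" "x \<in> D" "p \<in> Np" "m \<in> Nm" "h = x + p + m"
  shows "pc h = p" "mc h = m"
  using comp[OF assms(2-4)] assms(5) by simp_all

lemma direct:
  assumes "x \<in> D" "p \<in> Np" "m \<in> Nm" "x + p + m = 0"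
  shows "x = 0" "p = 0" "m = 0"
proof -
  have z: "(0::'a) = 0 + 0 + 0" by simp
  have "pc 0 = 0" "mc 0 = 0"
    using comp[OF csub_0[OF Dsub] csub_0[OF Np_csub] csub_0[OF Nm_csub]] by simp_all
  moreover have "pc 0 = p" "mc 0 = m" using comp[OF assms(1-3)] assms(4) by simp_all
  ultimately show "p = 0" "m = 0" by simp_all
  then show "x = 0" using assms(4) by simp
qed

lemma adj_dom_add: "h1 \<in> adj_dom D A \<Longrightarrow> h2 \<in> adj_dom D A \<Longrightarrow> h1 + h2 \<in> adj_dom D A"
  using ar_add adj_dom_ar ar_adj_dom by blast
lemma adj_dom_scale: "h \<in> adj_dom D A \<Longrightarrow> c *\<^sub>C h \<in> adj_dom D A"
  using ar_scale adj_dom_ar ar_adj_dom by blast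
lemma D_adj_dom: "x \<in> D \<Longrightarrow> x \<in> adj_dom D A"
  using ar_D ar_adj_dom by blast
lemma Np_adj_dom: "p \<in> Np \<Longrightarrow> p \<in> adj_dom D A"
  using Np_ar ar_adj_dom by blast
lemma Nm_adj_dom: "p \<in> Nm \<Longrightarrow> p \<in> adj_dom D A"
  using Nm_ar ar_adj_dom by blast

lemma pcmc_add:
  assumes "h1 \<in> adj_dom D A" "h2 \<in> adj_dom D A"
  shows "pc (h1 + h2) = pc h1 + pc h2" "mc (h1 + h2) = mc h1 + mc h2"
proof -
  obtain x1 where x1: "x1 \<in> D" "h1 = x1 + pc h1 + mc h1" using decomp[OF assms(1)] by blast
  obtain x2 where x2: "x2 \<in> D" "h2 = x2 + pc h2 + mc h2" using decomp[OF assms(2)] by blast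
  have "h1 + h2 = (x1 + pc h1 + mc h1) + (x2 + pc h2 + mc h2)"
    by (rule arg_cong2[where f="(+)", OF x1(2) x2(2)])
  also have "\<dots> = (x1 + x2) + (pc h1 + pc h2) + (mc h1 + mc h2)" by (simp add: algebra_simps)
  finally have e: "h1 + h2 = (x1 + x2) + (pc h1 + pc h2) + (mc h1 + mc h2)" .
  have i: "x1 + x2 \<in> D" "pc h1 + pc h2 \<in> Np" "mc h1 + mc h2 \<in> Nm"
    using x1 x2 csub_add[OF Dsub] csub_add[OF Np_csub pc_in pc_in] csub_add[OF Nm_csub mc_in mc_in] by auto
  show "pc (h1 + h2) = pc h1 + pc h2" "mc (h1 + h2) = mc h1 + mc h2"
    using comp[OF i] e by simp_all
qed

lemma pcmc_scale:
  assumes "h \<in> adj_dom D A"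
  shows "pc (c *\<^sub>C h) = c *\<^sub>C pc h" "mc (c *\<^sub>C h) = c *\<^sub>C mc h"
proof -
  obtain x1 where x1: "x1 \<in> D" "h = x1 + pc h + mc h" using decomp[OF assms(1)] by blast
  have "c *\<^sub>C h = c *\<^sub>C (x1 + pc h + mc h)" by (rule arg_cong[OF x1(2)])
  then have e: "c *\<^sub>C h = c *\<^sub>C x1 + c *\<^sub>C pc h + c *\<^sub>C mc h" by (simp only: sC_add_right)
  have i: "c *\<^sub>C x1 \<in> D" "c *\<^sub>C pc h \<in> Np" "c *\<^sub>C mc h \<in> Nm"
    using x1 csub_scale[OF Dsub] csub_scale[OF Np_csub pc_in] csub_scale[OF Nm_csub mc_in] by auto
  show "pc (c *\<^sub>C h) = c *\<^sub>C pc h" "mc (c *\<^sub>C h) = c *\<^sub>C mc h"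
    using comp[OF i] e by simp_all
qed

lemma pcmc_D: "x \<in> D \<Longrightarrow> pc x = 0 \<and> mc x = 0"
  using comp[OF _ csub_0[OF Np_csub] csub_0[OF Nm_csub], of x] by simp

lemma Im_ident:
  assumes x: "x \<in> D" and p: "p \<in> Np" and m: "m \<in> Nm"
  shows "Im (hs_inner (A x + \<i> *\<^sub>C p - \<i> *\<^sub>C m) (x + p + m)) = (norm m)\<^sup>2 - (norm p)\<^sup>2"
proof -
  have e1: "hs_inner (A x) p = \<i> * hs_inner x p"
    using p x unfolding Np_ar ar_def by (simp add: ip_scale_right)
  have e2: "hs_inner (A x) m = - \<i> * hs_inner x m"
    using m x unfolding Nm_ar ar_def by (simp add: ip_scale_right)
  have e3: "hs_inner p x = cnj (hs_inner x p)" "hs_inner m x = cnj (hs_inner x m)"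
    "hs_inner m p = cnj (hs_inner p m)" by (simp_all add: ip_cnj)
  have e4: "Im (hs_inner (A x) x) = 0" by (rule Axx_real[OF x])
  show ?thesis
    by (simp add: ip_add_left ip_add_right ip_diff_left ip_diff_right ip_scale_left ip_scale_right
        e1 e2 e3 e4 ip_self)
qed

lemma Im_adj:
  assumes h: "h \<in> adj_dom D A"
  shows "Im (hs_inner (adj D A h) h) = (norm (mc h))\<^sup>2 - (norm (pc h))\<^sup>2"
proof -
  obtain x where x: "x \<in> D" "h = x + pc h + mc h" using decomp[OF h] by blast
  have "adj D A (x + pc h + mc h) = A x + \<i> *\<^sub>C pc h - \<i> *\<^sub>C mc h"
    by (rule adj_eq[OF ar_sum[OF x(1) pc_in mc_in]])
  then have adjh: "adj D A h = A x + \<i> *\<^sub>C pc h - \<i> *\<^sub>C mc h" using x(2) by simp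
  have "hs_inner (adj D A h) h = hs_inner (A x + \<i> *\<^sub>C pc h - \<i> *\<^sub>C mc h) (x + pc h + mc h)"
    by (rule arg_cong2[where f=hs_inner, OF adjh x(2)])
  then show ?thesis using Im_ident[OF x(1) pc_in mc_in, of h h] by simp
qed

end


lemma ip_scaleR_left: "hs_inner (r *\<^sub>R x) y = complex_of_real r * hs_inner x (y::'a::chilbert)"
  by (simp add: sC_real[symmetric] ip_scale_left)
lemma ip_scaleR_right: "hs_inner x (r *\<^sub>R y) = complex_of_real r * hs_inner x (y::'a::chilbert)"
  by (simp add: sC_real[symmetric] ip_scale_right)

locale gset = opset D A for D :: "'a::chilbert set" and A +
  fixes G :: "(real \<times> real) set" and U :: "real \<times> real \<Rightarrow> 'a \<Rightarrow> 'a"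
  assumes sub: "aff_subgroup G" and rep: "strongly_cont_unitary_rep G U" and inva: "G_invariant G U D A"
begin

lemma a_pos: "g \<in> G \<Longrightarrow> fst g > 0"
  using sub by (auto simp: aff_subgroup_def affgrp_def)
lemma unit: "g \<in> G \<Longrightarrow> unitary (U g)"
  using rep by (simp add: strongly_cont_unitary_rep_def)
lemma U_add: "g \<in> G \<Longrightarrow> U g (x + y) = U g x + U g y"
  using unit by (simp add: unitary_def clinear_on_def)
lemma U_scale: "g \<in> G \<Longrightarrow> U g (c *\<^sub>C x) = c *\<^sub>C U g x"
  using unit by (simp add: unitary_def clinear_on_def)
lemma U_scaleR: "g \<in> G \<Longrightarrow> U g (r *\<^sub>R x) = r *\<^sub>R U g x"
  using U_scale[of g "complex_of_real r" x] by (simp add: sC_real)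
lemma U_minus: "g \<in> G \<Longrightarrow> U g (- x) = - U g x"
  using U_scale[of g "-1" x] by (simp add: sC_minus_left)
lemma U_diff: "g \<in> G \<Longrightarrow> U g (x - y) = U g x - U g y"
  using U_add[of g x "-y"] U_minus[of g y] by simp
lemma U_zero: "g \<in> G \<Longrightarrow> U g 0 = 0"
  using U_scale[of g 0 0] by simp
lemma U_norm: "g \<in> G \<Longrightarrow> norm (U g x) = norm x"
  using unit by (simp add: unitary_def)
lemma U_ip: "g \<in> G \<Longrightarrow> hs_inner (U g x) (U g y) = hs_inner x y"
  using unit unitary_ip by blast
lemma U_bij: "g \<in> G \<Longrightarrow> bij (U g)"
  using unit by (simp add: unitary_def)
lemma U_mult: "g \<in> G \<Longrightarrow> h \<in> G \<Longrightarrow> U (gmult g h) x = U g (U h x)"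
  using rep by (simp add: strongly_cont_unitary_rep_def)
lemma U_id: "U (1, 0) x = x"
  using rep by (simp add: strongly_cont_unitary_rep_def)
lemma ginv_G: "g \<in> G \<Longrightarrow> ginv g \<in> G"
  using sub by (simp add: aff_subgroup_def)
lemma ginv_mult: "g \<in> G \<Longrightarrow> gmult (ginv g) g = (1, 0)" "g \<in> G \<Longrightarrow> gmult g (ginv g) = (1, 0)"
  using a_pos[of g] by (auto simp: gmult_def ginv_def field_simps)
lemma U_inv1: "g \<in> G \<Longrightarrow> U (ginv g) (U g x) = x"
  using U_mult[of "ginv g" g x] ginv_G ginv_mult U_id by simp
lemma U_inv2: "g \<in> G \<Longrightarrow> U g (U (ginv g) x) = x"
  using U_mult[of g "ginv g" x] ginv_G ginv_mult U_id by simp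
lemma UD: "g \<in> G \<Longrightarrow> U g ` D = D"
  using inva by (simp add: G_invariant_def)
lemma UD_in: "g \<in> G \<Longrightarrow> x \<in> D \<Longrightarrow> U g x \<in> D"
  using UD by blast
lemma inv_U: "g \<in> G \<Longrightarrow> inv (U g) y = U (ginv g) y"
proof -
  assume g: "g \<in> G"
  have "inv (U g) (U g (U (ginv g) y)) = U (ginv g) y"
    by (rule inv_f_f) (use U_bij[OF g] bij_is_inj in blast)
  then show ?thesis using U_inv2[OF g] by simp
qed

lemma Ainv: "g \<in> G \<Longrightarrow> x \<in> D \<Longrightarrow> U g (A (U (ginv g) x)) = fst g *\<^sub>R A x + snd g *\<^sub>R x"
  using inva inv_U by (simp add: G_invariant_def)

lemma transport:
  assumes g: "g \<in> G" and k: "ar k w"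
  shows "ar (U g k) ((1 / fst g) *\<^sub>R U g (w - snd g *\<^sub>R k))"
  unfolding ar_def
proof (intro ballI)
  fix x' assume x': "x' \<in> D"
  define x'' where "x'' = U (ginv g) x'"
  have x''D: "x'' \<in> D" unfolding x''_def by (rule UD_in[OF ginv_G[OF g] x'])
  have ux: "U g x'' = x'" unfolding x''_def by (rule U_inv2[OF g])
  have a: "fst g > 0" by (rule a_pos[OF g])
  have "U g (A x'') = fst g *\<^sub>R A x' + snd g *\<^sub>R x'" unfolding x''_def by (rule Ainv[OF g x'])
  then have Ax': "A x' = (1 / fst g) *\<^sub>R (U g (A x'') - snd g *\<^sub>R x')"
    using a by (simp add: field_simps)
  have "hs_inner (A x') (U g k) = complex_of_real (1 / fst g) *
      (hs_inner (U g (A x'')) (U g k) - complex_of_real (snd g) * hs_inner (U g x'') (U g k))"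
    unfolding Ax' by (simp add: ip_scaleR_left ip_diff_left ux)
  also have "\<dots> = complex_of_real (1 / fst g) * (hs_inner (A x'') k - complex_of_real (snd g) * hs_inner x'' k)"
    by (simp add: U_ip[OF g])
  also have "hs_inner (A x'') k = hs_inner x'' w" using k x''D by (simp add: ar_def)
  also have "complex_of_real (1 / fst g) * (hs_inner x'' w - complex_of_real (snd g) * hs_inner x'' k)
      = complex_of_real (1 / fst g) * hs_inner (U g x'') (U g (w - snd g *\<^sub>R k))"
    by (simp add: U_ip[OF g] ip_diff_right ip_scaleR_right)
  also have "\<dots> = hs_inner x' ((1 / fst g) *\<^sub>R U g (w - snd g *\<^sub>R k))"
    by (simp add: ux ip_scaleR_right)
  finally show "hs_inner (A x') (U g k) = hs_inner x' ((1 / fst g) *\<^sub>R U g (w - snd g *\<^sub>R k))" .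
qed

lemma U_adj_dom: "g \<in> G \<Longrightarrow> k \<in> adj_dom D A \<Longrightarrow> U g k \<in> adj_dom D A"
  using transport adj_dom_ar ar_adj_dom by blast

lemma Im_transport:
  assumes g: "g \<in> G" and k: "k \<in> adj_dom D A"
  shows "Im (hs_inner (adj D A (U g k)) (U g k)) = (1 / fst g) * Im (hs_inner (adj D A k) k)"
proof -
  have "adj D A (U g k) = (1 / fst g) *\<^sub>R U g (adj D A k - snd g *\<^sub>R k)"
    by (rule adj_eq[OF transport[OF g adj_dom_ar[OF k]]])
  then have "hs_inner (adj D A (U g k)) (U g k)
     = complex_of_real (1 / fst g) * (hs_inner (adj D A k) k - complex_of_real (snd g) * hs_inner k k)"
    by (simp add: ip_scaleR_left U_ip[OF g] ip_diff_left)
  then show ?thesis by (simp add: ip_self)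
qed

end


context gset begin

lemma contr_D:
  assumes "V \<in> contractions D A"
  shows "\<And>f1 f2. f1 \<in> Np \<Longrightarrow> f2 \<in> Np \<Longrightarrow> V (f1 + f2) = V f1 + V f2"
    and "\<And>f c. f \<in> Np \<Longrightarrow> V (c *\<^sub>C f) = c *\<^sub>C V f"
    and "\<And>f. f \<in> Np \<Longrightarrow> V f \<in> Nm"
    and "\<And>f. f \<in> Np \<Longrightarrow> norm (V f) \<le> norm f"
    and "\<And>f. f \<notin> Np \<Longrightarrow> V f = 0"
  using assms unfolding contractions_def clinear_on_def by blast+

lemma ext_mem: "h \<in> ext_dom D A V \<longleftrightarrow> (\<exists>x f. h = x + (f - V f) \<and> x \<in> D \<and> f \<in> Np)"
  unfolding ext_dom_def by blast

lemma fVf_split: "(x::'a) + (f - V f) = x + f + (- V f)" by (simp add: algebra_simps)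

lemma ext_adj:
  assumes V: "V \<in> contractions D A" and x: "x \<in> D" and f: "f \<in> Np"
  shows "x + (f - V f) \<in> adj_dom D A" "pc (x + (f - V f)) = f" "mc (x + (f - V f)) = - V f"
proof -
  have m: "- V f \<in> Nm" using csub_minus[OF Nm_csub contr_D(3)[OF V f]] .
  show "x + (f - V f) \<in> adj_dom D A" unfolding fVf_split by (rule ar_adj_dom[OF ar_sum[OF x f m]])
  show "pc (x + (f - V f)) = f" "mc (x + (f - V f)) = - V f" unfolding fVf_split using comp[OF x f m] by simp_all
qed

lemma sign:
  assumes g: "g \<in> G" and V: "V \<in> contractions D A" and x: "x \<in> D" and f: "f \<in> Np"
  shows "norm (mc (U g (x + (f - V f)))) \<le> norm (pc (U g (x + (f - V f))))"
proof -
  define k where "k = x + (f - V f)"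
  have k: "k \<in> adj_dom D A" "pc k = f" "mc k = - V f" unfolding k_def using ext_adj[OF V x f] by auto
  have "Im (hs_inner (adj D A k) k) = (norm (V f))\<^sup>2 - (norm f)\<^sup>2" using Im_adj[OF k(1)] k by simp
  also have "\<dots> \<le> 0" using contr_D(4)[OF V f] by (simp add: power_mono)
  finally have i0: "Im (hs_inner (adj D A k) k) \<le> 0" .
  have "Im (hs_inner (adj D A (U g k)) (U g k)) \<le> 0"
    unfolding Im_transport[OF g k(1)] using i0 a_pos[OF g] by (simp add: divide_nonpos_pos)
  then have "(norm (mc (U g k)))\<^sup>2 \<le> (norm (pc (U g k)))\<^sup>2" using Im_adj[OF U_adj_dom[OF g k(1)]] by simp
  then show ?thesis unfolding k_def by (rule power2_le_imp_le) simp
qed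

definition Lf :: "real \<times> real \<Rightarrow> ('a \<Rightarrow> 'a) \<Rightarrow> 'a \<Rightarrow> 'a" where "Lf g V f = pc (U g (f - V f))"
definition Mf :: "real \<times> real \<Rightarrow> ('a \<Rightarrow> 'a) \<Rightarrow> 'a \<Rightarrow> 'a" where "Mf g V f = - mc (U g (f - V f))"

lemma fVf_adj: "V \<in> contractions D A \<Longrightarrow> f \<in> Np \<Longrightarrow> f - V f \<in> adj_dom D A"
  using ext_adj(1)[of V 0 f] csub_0[OF Dsub] by simp

lemma LM_add:
  assumes g: "g \<in> G" and V: "V \<in> contractions D A" and f: "f1 \<in> Np" "f2 \<in> Np"
  shows "Lf g V (f1 + f2) = Lf g V f1 + Lf g V f2" "Mf g V (f1 + f2) = Mf g V f1 + Mf g V f2"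
proof -
  have e: "U g ((f1 + f2) - V (f1 + f2)) = U g (f1 - V f1) + U g (f2 - V f2)"
    using contr_D(1)[OF V f] by (simp add: U_add[OF g, symmetric] algebra_simps)
  have a: "U g (f1 - V f1) \<in> adj_dom D A" "U g (f2 - V f2) \<in> adj_dom D A"
    using U_adj_dom[OF g fVf_adj[OF V]] f by auto
  show "Lf g V (f1 + f2) = Lf g V f1 + Lf g V f2" unfolding Lf_def e by (rule pcmc_add(1)[OF a])
  show "Mf g V (f1 + f2) = Mf g V f1 + Mf g V f2" unfolding Mf_def e pcmc_add(2)[OF a] by simp
qed

lemma LM_scale:
  assumes g: "g \<in> G" and V: "V \<in> contractions D A" and f: "f \<in> Np"
  shows "Lf g V (c *\<^sub>C f) = c *\<^sub>C Lf g V f" "Mf g V (c *\<^sub>C f) = c *\<^sub>C Mf g V f"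
proof -
  have e: "U g (c *\<^sub>C f - V (c *\<^sub>C f)) = c *\<^sub>C U g (f - V f)"
    using contr_D(2)[OF V f] by (simp add: U_scale[OF g] U_diff[OF g] sC_diff_right)
  have a: "U g (f - V f) \<in> adj_dom D A" using U_adj_dom[OF g fVf_adj[OF V f]] .
  show "Lf g V (c *\<^sub>C f) = c *\<^sub>C Lf g V f" unfolding Lf_def e by (rule pcmc_scale(1)[OF a])
  show "Mf g V (c *\<^sub>C f) = c *\<^sub>C Mf g V f" unfolding Mf_def e pcmc_scale(2)[OF a] by (simp add: sC_minus_right)
qed

lemma LM_zero:
  assumes g: "g \<in> G" and V: "V \<in> contractions D A"
  shows "Lf g V 0 = 0" "Mf g V 0 = 0"
  using LM_scale[OF g V csub_0[OF Np_csub], of 0] by simp_all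

lemma LM_diff:
  assumes g: "g \<in> G" and V: "V \<in> contractions D A" and f: "f1 \<in> Np" "f2 \<in> Np"
  shows "Lf g V (f1 - f2) = Lf g V f1 - Lf g V f2" "Mf g V (f1 - f2) = Mf g V f1 - Mf g V f2"
proof -
  have m: "- f2 \<in> Np" using csub_minus[OF Np_csub f(2)] .
  have "- f2 = (-1) *\<^sub>C f2" by (simp add: sC_minus_left)
  then have "Lf g V (- f2) = - Lf g V f2" "Mf g V (- f2) = - Mf g V f2"
    using LM_scale[OF g V f(2), of "-1"] by (simp_all add: sC_minus_left)
  then show "Lf g V (f1 - f2) = Lf g V f1 - Lf g V f2" "Mf g V (f1 - f2) = Mf g V f1 - Mf g V f2"
    using LM_add[OF g V f(1) m] by simp_all
qed

lemma LM_in: "Lf g V f \<in> Np" "Mf g V f \<in> Nm"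
  unfolding Lf_def Mf_def using pc_in csub_minus[OF Nm_csub mc_in] by auto

lemma LM_sign:
  assumes g: "g \<in> G" and V: "V \<in> contractions D A" and f: "f \<in> Np"
  shows "norm (Mf g V f) \<le> norm (Lf g V f)"
  using sign[OF g V csub_0[OF Dsub] f] by (simp add: Lf_def Mf_def)

lemma U_ext_comp:
  assumes g: "g \<in> G" and V: "V \<in> contractions D A" and x: "x \<in> D" and f: "f \<in> Np"
  shows "U g (x + (f - V f)) \<in> adj_dom D A"
    "pc (U g (x + (f - V f))) = Lf g V f" "mc (U g (x + (f - V f))) = - Mf g V f"
proof -
  have e: "U g (x + (f - V f)) = U g x + U g (f - V f)" by (rule U_add[OF g])
  have a: "U g x \<in> adj_dom D A" "U g (f - V f) \<in> adj_dom D A"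
    using D_adj_dom[OF UD_in[OF g x]] U_adj_dom[OF g fVf_adj[OF V f]] by auto
  show "U g (x + (f - V f)) \<in> adj_dom D A" unfolding e by (rule adj_dom_add[OF a])
  show "pc (U g (x + (f - V f))) = Lf g V f" "mc (U g (x + (f - V f))) = - Mf g V f"
    unfolding e pcmc_add[OF a] Lf_def Mf_def using pcmc_D[OF UD_in[OF g x]] by simp_all
qed

end


context gset begin

lemma exists_sub:
  assumes g: "g \<in> G" and V: "V \<in> contractions D A"
  shows "\<exists>W\<in>contractions D A. U g ` ext_dom D A V \<subseteq> ext_dom D A W"
proof -
  define L where "L = Lf g V"
  define M where "M = Mf g V"
  have finF: "finite (L ` Ep)" using Ep(1) by simp
  obtain EK where EK: "finite EK" "orthonormal EK" "EK \<subseteq> cspan (L ` Ep)" "L ` Ep \<subseteq> cspan EK"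
    using gram_schmidt[OF finF] by blast
  define K where "K = L ` Np"
  have Ksub: "csubspace K"
    unfolding csubspace_def K_def
  proof (intro conjI ballI allI)
    show "0 \<in> L ` Np" using LM_zero[OF g V] csub_0[OF Np_csub] unfolding L_def by force
  next
    fix u v assume "u \<in> L ` Np" "v \<in> L ` Np"
    then obtain f1 f2 where "f1 \<in> Np" "f2 \<in> Np" "u = L f1" "v = L f2" by blast
    then show "u + v \<in> L ` Np" using LM_add(1)[OF g V] csub_add[OF Np_csub] unfolding L_def
      by (metis image_eqI)
  next
    fix c u assume "u \<in> L ` Np"
    then obtain f where "f \<in> Np" "u = L f" by blast
    then show "c *\<^sub>C u \<in> L ` Np" using LM_scale(1)[OF g V] csub_scale[OF Np_csub] unfolding L_def
      by (metis image_eqI)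
  qed
  have KEK: "cspan EK = K"
  proof
    have "L ` Ep \<subseteq> K" unfolding K_def using Ep_sub by blast
    then have "cspan (L ` Ep) \<subseteq> K" by (rule cspan_least[OF Ksub])
    then show "cspan EK \<subseteq> K" using cspan_least[OF Ksub] EK(3) by blast
  next
    define T where "T = {f \<in> Np. L f \<in> cspan EK}"
    have Tsub: "csubspace T"
      unfolding csubspace_def T_def
    proof (intro conjI ballI allI)
      show "0 \<in> {f \<in> Np. L f \<in> cspan EK}"
        using LM_zero[OF g V] csub_0[OF Np_csub] csub_0[OF cspan_csub] unfolding L_def by simp
    next
      fix u v assume "u \<in> {f \<in> Np. L f \<in> cspan EK}" "v \<in> {f \<in> Np. L f \<in> cspan EK}"
      then show "u + v \<in> {f \<in> Np. L f \<in> cspan EK}"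
        using LM_add(1)[OF g V] csub_add[OF Np_csub] csub_add[OF cspan_csub, of _ EK] unfolding L_def by auto
    next
      fix c u assume "u \<in> {f \<in> Np. L f \<in> cspan EK}"
      then show "c *\<^sub>C u \<in> {f \<in> Np. L f \<in> cspan EK}"
        using LM_scale(1)[OF g V] csub_scale[OF Np_csub] csub_scale[OF cspan_csub, of _ EK] unfolding L_def by auto
    qed
    have "Ep \<subseteq> T" unfolding T_def using Ep_sub EK(4) by blast
    then have "cspan Ep \<subseteq> T" by (rule cspan_least[OF Tsub])
    then have "Np \<subseteq> T" using Ep(3) by simp
    then show "K \<subseteq> cspan EK" unfolding K_def T_def by blast
  qed
  have wd: "M f1 = M f2" if "f1 \<in> Np" "f2 \<in> Np" "L f1 = L f2" for f1 f2
  proof -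
    have "norm (M (f1 - f2)) \<le> norm (L (f1 - f2))"
      unfolding L_def M_def by (rule LM_sign[OF g V csub_diff[OF Np_csub that(1,2)]])
    then have "M (f1 - f2) = 0" using that LM_diff(1)[OF g V that(1,2)] unfolding L_def M_def by simp
    then show ?thesis using LM_diff(2)[OF g V that(1,2)] unfolding M_def by simp
  qed
  define W0 where "W0 y = M (SOME f. f \<in> Np \<and> L f = y)" for y
  have W0L: "W0 (L f) = M f" if "f \<in> Np" for f
  proof -
    have "(SOME f'. f' \<in> Np \<and> L f' = L f) \<in> Np \<and> L (SOME f'. f' \<in> Np \<and> L f' = L f) = L f"
      by (rule someI[of _ f]) (use that in simp)
    then show ?thesis unfolding W0_def using wd that by blast
  qed
  have PK: "\<exists>f\<in>Np. proj EK q = L f" for q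
  proof -
    have "proj EK q \<in> K" using proj_in_span[of EK q] KEK by simp
    then show ?thesis unfolding K_def by blast
  qed
  define W where "W q = (if q \<in> Np then W0 (proj EK q) else 0)" for q
  have Wc: "W \<in> contractions D A"
    unfolding contractions_def clinear_on_def
  proof (intro CollectI conjI ballI allI impI subsetI)
    fix q1 q2 assume q: "q1 \<in> Np" "q2 \<in> Np"
    obtain f1 where f1: "f1 \<in> Np" "proj EK q1 = L f1" using PK by blast
    obtain f2 where f2: "f2 \<in> Np" "proj EK q2 = L f2" using PK by blast
    have "proj EK (q1 + q2) = L (f1 + f2)"
      using f1 f2 LM_add(1)[OF g V f1(1) f2(1)] by (simp add: proj_add L_def)
    then have "W (q1 + q2) = M (f1 + f2)" unfolding W_def
      using csub_add[OF Np_csub q] W0L csub_add[OF Np_csub f1(1) f2(1)] by simp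
    also have "\<dots> = M f1 + M f2" unfolding M_def by (rule LM_add(2)[OF g V f1(1) f2(1)])
    also have "\<dots> = W q1 + W q2" unfolding W_def using q f1 f2 W0L by simp
    finally show "W (q1 + q2) = W q1 + W q2" .
  next
    fix c q assume q: "q \<in> Np"
    obtain f where f: "f \<in> Np" "proj EK q = L f" using PK by blast
    have "proj EK (c *\<^sub>C q) = L (c *\<^sub>C f)"
      using f LM_scale(1)[OF g V f(1)] by (simp add: proj_scale L_def)
    then have "W (c *\<^sub>C q) = M (c *\<^sub>C f)" unfolding W_def
      using csub_scale[OF Np_csub q] W0L csub_scale[OF Np_csub f(1)] by simp
    also have "\<dots> = c *\<^sub>C M f" unfolding M_def by (rule LM_scale(2)[OF g V f(1)])
    also have "\<dots> = c *\<^sub>C W q" unfolding W_def using q f W0L by simp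
    finally show "W (c *\<^sub>C q) = c *\<^sub>C W q" .
  next
    fix y assume "y \<in> W ` Np"
    then obtain q where q: "q \<in> Np" "y = W q" by blast
    obtain f where f: "f \<in> Np" "proj EK q = L f" using PK by blast
    have "y = M f" using q f W0L by (simp add: W_def)
    then show "y \<in> Nm" unfolding M_def using LM_in by simp
  next
    fix q assume q: "q \<in> Np"
    obtain f where f: "f \<in> Np" "proj EK q = L f" using PK by blast
    have "norm (W q) = norm (M f)" using q f W0L by (simp add: W_def)
    also have "\<dots> \<le> norm (L f)" unfolding L_def M_def by (rule LM_sign[OF g V f(1)])
    also have "\<dots> \<le> norm q" using f(2) proj_norm[OF EK(1,2), of q] by simp
    finally show "norm (W q) \<le> norm q" .
  next
    fix q assume "q \<notin> Np"
    then show "W q = 0" by (simp add: W_def)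
  qed
  have incl: "U g ` ext_dom D A V \<subseteq> ext_dom D A W"
  proof
    fix h assume "h \<in> U g ` ext_dom D A V"
    then obtain k where k: "h = U g k" "k \<in> ext_dom D A V" by blast
    then obtain x f where xf0: "k = x + (f - V f)" "x \<in> D" "f \<in> Np" unfolding ext_mem by blast
    then have xf: "h = U g (x + (f - V f))" "x \<in> D" "f \<in> Np" using k by simp_all
    have c: "h \<in> adj_dom D A" "pc h = L f" "mc h = - M f"
      using U_ext_comp[OF g V xf(2,3)] xf(1) unfolding L_def M_def by auto
    obtain x0 where x0: "x0 \<in> D" "h = x0 + pc h + mc h" using decomp[OF c(1)] by blast
    have qN: "L f \<in> Np" unfolding L_def by (rule LM_in)
    have "proj EK (L f) = L f" using proj_id[OF EK(1,2)] KEK xf(3) unfolding K_def by blast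
    then have "W (L f) = M f" using qN W0L xf(3) by (simp add: W_def)
    then have "h = x0 + (L f - W (L f))" using x0(2) c by simp
    then show "h \<in> ext_dom D A W" unfolding ext_mem using x0(1) qN by blast
  qed
  show ?thesis using Wc incl by blast
qed

lemma ext_incl_eq:
  assumes V: "V \<in> contractions D A" and V': "V' \<in> contractions D A"
    and sub: "ext_dom D A V \<subseteq> ext_dom D A V'"
  shows "V = V'"
proof
  fix f show "V f = V' f"
  proof (cases "f \<in> Np")
    case False then show ?thesis using contr_D(5)[OF V] contr_D(5)[OF V'] by simp
  next
    case True
    have "0 + (f - V f) \<in> ext_dom D A V" unfolding ext_mem using True csub_0[OF Dsub] by blast
    then have "f - V f \<in> ext_dom D A V'" using sub by auto
    then obtain x f' where xf: "f - V f = x + (f' - V' f')" "x \<in> D" "f' \<in> Np" unfolding ext_mem by blast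
    have h1: "f - V f \<in> adj_dom D A" using fVf_adj[OF V True] .
    have "pc (f - V f) = f" "mc (f - V f) = - V f" using ext_adj(2,3)[OF V csub_0[OF Dsub] True] by simp_all
    moreover have "pc (f - V f) = f'" "mc (f - V f) = - V' f'"
      unfolding xf(1) using ext_adj(2,3)[OF V' xf(2,3)] by simp_all
    ultimately show ?thesis by simp
  qed
qed

lemma exists_eq:
  assumes g: "g \<in> G" and V: "V \<in> contractions D A"
  shows "\<exists>W\<in>contractions D A. U g ` ext_dom D A V = ext_dom D A W"
proof -
  obtain W where W: "W \<in> contractions D A" "U g ` ext_dom D A V \<subseteq> ext_dom D A W"
    using exists_sub[OF g V] by blast
  obtain V2 where V2: "V2 \<in> contractions D A" "U (ginv g) ` ext_dom D A W \<subseteq> ext_dom D A V2"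
    using exists_sub[OF ginv_G[OF g] W(1)] by blast
  have bk1: "U (ginv g) ` U g ` S = S" for S
    using U_inv1[OF g] by (simp add: image_image)
  have bk2: "U g ` U (ginv g) ` S = S" for S
    using U_inv2[OF g] by (simp add: image_image)
  have "ext_dom D A V = U (ginv g) ` U g ` ext_dom D A V" by (rule bk1[symmetric])
  also have "\<dots> \<subseteq> U (ginv g) ` ext_dom D A W" using W(2) by (rule image_mono)
  finally have s1: "ext_dom D A V \<subseteq> U (ginv g) ` ext_dom D A W" .
  then have "ext_dom D A V \<subseteq> ext_dom D A V2" using V2(2) by blast
  then have "V = V2" by (rule ext_incl_eq[OF V V2(1)])
  then have s2: "U (ginv g) ` ext_dom D A W \<subseteq> ext_dom D A V" using V2(2) by simp
  have "ext_dom D A W = U g ` U (ginv g) ` ext_dom D A W" by (rule bk2[symmetric])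
  also have "\<dots> \<subseteq> U g ` ext_dom D A V" using s2 by (rule image_mono)
  finally show ?thesis using W by blast
qed

lemma Gamma_char:
  assumes g: "g \<in> G" and V: "V \<in> contractions D A"
  shows "Gamma U D A g V \<in> contractions D A" "U g ` ext_dom D A V = ext_dom D A (Gamma U D A g V)"
proof -
  obtain W where W: "W \<in> contractions D A" "U g ` ext_dom D A V = ext_dom D A W"
    using exists_eq[OF g V] by blast
  have "Gamma U D A g V = W" unfolding Gamma_def
  proof (rule the_equality)
    show "W \<in> contractions D A \<and> U g ` ext_dom D A V = ext_dom D A W" using W by blast
    fix W' assume "W' \<in> contractions D A \<and> U g ` ext_dom D A V = ext_dom D A W'"
    then show "W' = W" using ext_incl_eq[OF W(1)] W(2) by auto
  qed
  then show "Gamma U D A g V \<in> contractions D A" "U g ` ext_dom D A V = ext_dom D A (Gamma U D A g V)"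
    using W by simp_all
qed

end


context gset begin

lemma adj_fVf:
  assumes V: "V \<in> contractions D A" and f: "f \<in> Np"
  shows "ar (f - V f) (\<i> *\<^sub>C f + \<i> *\<^sub>C V f)"
proof -
  have m: "- V f \<in> Nm" using csub_minus[OF Nm_csub contr_D(3)[OF V f]] .
  have "ar (0 + f + - V f) (A 0 + \<i> *\<^sub>C f - \<i> *\<^sub>C (- V f))" by (rule ar_sum[OF csub_0[OF Dsub] f m])
  then show ?thesis by (simp add: A_zero sC_minus_right)
qed

lemma adj_U_fVf:
  assumes g: "g \<in> G" and V: "V \<in> contractions D A" and f: "f \<in> Np"
  shows "adj D A (U g (f - V f)) = (1 / fst g) *\<^sub>R U g ((\<i> *\<^sub>C f + \<i> *\<^sub>C V f) - snd g *\<^sub>R (f - V f))"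
  by (rule adj_eq[OF transport[OF g adj_fVf[OF V f]]])

lemma norm_fVf: "V \<in> contractions D A \<Longrightarrow> f \<in> Np \<Longrightarrow> norm (f - V f) \<le> 2 * norm f"
  using contr_D(4)[of V f] norm_triangle_ineq4[of f "V f"] by simp
lemma norm_ifVf: "V \<in> contractions D A \<Longrightarrow> f \<in> Np \<Longrightarrow> norm (\<i> *\<^sub>C f + \<i> *\<^sub>C V f) \<le> 2 * norm f"
  using contr_D(4)[of V f] norm_triangle_ineq[of "\<i> *\<^sub>C f" "\<i> *\<^sub>C V f"] by (simp add: norm_sC)

lemma LM_bound:
  assumes g: "g \<in> G" and V: "V \<in> contractions D A" and f: "f \<in> Np"
  shows "norm (Lf g V f) \<le> (1 + (1 + \<bar>snd g\<bar>) / fst g) * norm f"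
    "norm (Mf g V f) \<le> (1 + (1 + \<bar>snd g\<bar>) / fst g) * norm f"
proof -
  define a where "a = fst g"
  define b where "b = snd g"
  have a: "a > 0" unfolding a_def by (rule a_pos[OF g])
  define h where "h = U g (f - V f)"
  have adjh: "adj D A h = (1 / a) *\<^sub>R U g ((\<i> *\<^sub>C f + \<i> *\<^sub>C V f) - b *\<^sub>R (f - V f))"
    unfolding h_def a_def b_def by (rule adj_U_fVf[OF g V f])
  have "norm (adj D A h) = (1 / a) * norm ((\<i> *\<^sub>C f + \<i> *\<^sub>C V f) - b *\<^sub>R (f - V f))"
    unfolding adjh using a by (simp add: U_norm[OF g])
  also have "\<dots> \<le> (1 / a) * (2 * norm f + \<bar>b\<bar> * (2 * norm f))"
  proof (rule mult_left_mono)
    have "norm ((\<i> *\<^sub>C f + \<i> *\<^sub>C V f) - b *\<^sub>R (f - V f)) \<le> norm (\<i> *\<^sub>C f + \<i> *\<^sub>C V f) + \<bar>b\<bar> * norm (f - V f)"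
      using norm_triangle_ineq4 by (metis norm_scaleR)
    also have "\<dots> \<le> 2 * norm f + \<bar>b\<bar> * (2 * norm f)"
      using norm_ifVf[OF V f] norm_fVf[OF V f] by (intro add_mono mult_left_mono) auto
    finally show "norm ((\<i> *\<^sub>C f + \<i> *\<^sub>C V f) - b *\<^sub>R (f - V f)) \<le> 2 * norm f + \<bar>b\<bar> * (2 * norm f)" .
  qed (use a in simp)
  finally have n1: "norm (adj D A h) \<le> (1 / a) * (2 * norm f + \<bar>b\<bar> * (2 * norm f))" .
  have n2: "norm h \<le> 2 * norm f" unfolding h_def using norm_fVf[OF V f] by (simp add: U_norm[OF g])
  have ni: "norm (\<i> *\<^sub>C h) = norm h" by (simp add: norm_sC)
  have tot: "(1/2) * ((1 / a) * (2 * norm f + \<bar>b\<bar> * (2 * norm f)) + 2 * norm f) = (1 + (1 + \<bar>b\<bar>) / a) * norm f"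
    using a by (simp add: field_simps)
  have key: "(1/2) * (norm (adj D A h) + norm (\<i> *\<^sub>C h)) \<le> (1 + (1 + \<bar>b\<bar>) / a) * norm f"
  proof -
    have "(1/2) * (norm (adj D A h) + norm (\<i> *\<^sub>C h)) \<le> (1/2) * ((1 / a) * (2 * norm f + \<bar>b\<bar> * (2 * norm f)) + 2 * norm f)"
      by (intro mult_left_mono add_mono) (use n1 n2 ni in auto)
    from this[unfolded tot] show ?thesis .
  qed
  have "norm (pc h) = (1/2) * norm (Pp (adj D A h + \<i> *\<^sub>C h))" by (simp add: pc_def norm_sC)
  also have "\<dots> \<le> (1/2) * (norm (adj D A h) + norm (\<i> *\<^sub>C h))"
    using Pp_norm[of "adj D A h + \<i> *\<^sub>C h"] norm_triangle_ineq[of "adj D A h" "\<i> *\<^sub>C h"] by simp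
  finally have "norm (pc h) \<le> (1 + (1 + \<bar>b\<bar>) / a) * norm f" using key by linarith
  then show "norm (Lf g V f) \<le> (1 + (1 + \<bar>snd g\<bar>) / fst g) * norm f" by (simp add: Lf_def h_def a_def b_def)
  have "norm (mc h) = (1/2) * norm (Pm (adj D A h - \<i> *\<^sub>C h))" by (simp add: mc_def norm_sC)
  also have "\<dots> \<le> (1/2) * (norm (adj D A h) + norm (\<i> *\<^sub>C h))"
    using Pm_norm[of "adj D A h - \<i> *\<^sub>C h"] norm_triangle_ineq4[of "adj D A h" "\<i> *\<^sub>C h"] by simp
  finally have "norm (mc h) \<le> (1 + (1 + \<bar>b\<bar>) / a) * norm f" using key by linarith
  then show "norm (Mf g V f) \<le> (1 + (1 + \<bar>snd g\<bar>) / fst g) * norm f" by (simp add: Mf_def h_def a_def b_def)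
qed

lemma Gam_decomp:
  assumes g: "g \<in> G" and V: "V \<in> contractions D A" and x: "x \<in> D" and f: "f \<in> Np"
  shows "\<exists>x'\<in>D. U g (x + (f - V f)) = x' + (Lf g V f - Gamma U D A g V (Lf g V f))
          \<and> Gamma U D A g V (Lf g V f) = Mf g V f"
proof -
  define W where "W = Gamma U D A g V"
  have W: "W \<in> contractions D A" "U g ` ext_dom D A V = ext_dom D A W"
    unfolding W_def using Gamma_char[OF g V] by auto
  have "x + (f - V f) \<in> ext_dom D A V" unfolding ext_mem using x f by blast
  then have "U g (x + (f - V f)) \<in> ext_dom D A W" using W(2) by blast
  then obtain x' q where xq: "U g (x + (f - V f)) = x' + (q - W q)" "x' \<in> D" "q \<in> Np"
    unfolding ext_mem by blast
  have "pc (U g (x + (f - V f))) = q" "mc (U g (x + (f - V f))) = - W q"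
    unfolding xq(1) using ext_adj(2,3)[OF W(1) xq(2,3)] by simp_all
  moreover have "pc (U g (x + (f - V f))) = Lf g V f" "mc (U g (x + (f - V f))) = - Mf g V f"
    using U_ext_comp[OF g V x f] by simp_all
  ultimately have "q = Lf g V f" "W q = Mf g V f" by simp_all
  then show ?thesis using xq unfolding W_def by blast
qed

lemma Gam_LM:
  assumes g: "g \<in> G" and V: "V \<in> contractions D A" and f: "f \<in> Np"
  shows "Gamma U D A g V (Lf g V f) = Mf g V f"
  using Gam_decomp[OF g V csub_0[OF Dsub] f] by blast

lemma L_surj:
  assumes g: "g \<in> G" and V: "V \<in> contractions D A" and q: "q \<in> Np"
  shows "\<exists>f\<in>Np. Lf g V f = q"
proof -
  define W where "W = Gamma U D A g V"
  have W: "W \<in> contractions D A" "U g ` ext_dom D A V = ext_dom D A W"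
    unfolding W_def using Gamma_char[OF g V] by auto
  have "0 + (q - W q) \<in> ext_dom D A W" unfolding ext_mem using q csub_0[OF Dsub] by blast
  then have "0 + (q - W q) \<in> U g ` ext_dom D A V" using W(2) by simp
  then obtain k where k: "0 + (q - W q) = U g k" "k \<in> ext_dom D A V" by blast
  then obtain x f where xf: "k = x + (f - V f)" "x \<in> D" "f \<in> Np" unfolding ext_mem by blast
  have "pc (0 + (q - W q)) = q" using ext_adj(2)[OF W(1) csub_0[OF Dsub] q] .
  moreover have "pc (U g (x + (f - V f))) = Lf g V f" using U_ext_comp(2)[OF g V xf(2,3)] .
  ultimately show ?thesis using k(1) xf by auto
qed

lemma L_lower:
  assumes g: "g \<in> G" and V: "V \<in> contractions D A" and f: "f \<in> Np"
  shows "norm f \<le> (1 + fst g + \<bar>snd g\<bar>) * norm (Lf g V f)"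
proof -
  define W where "W = Gamma U D A g V"
  have W: "W \<in> contractions D A" unfolding W_def using Gamma_char[OF g V] by auto
  define q where "q = Lf g V f"
  have qN: "q \<in> Np" unfolding q_def by (rule LM_in)
  obtain x' where x': "x' \<in> D" "U g (0 + (f - V f)) = x' + (q - W q)"
    using Gam_decomp[OF g V csub_0[OF Dsub] f] unfolding W_def q_def by blast
  have g': "ginv g \<in> G" by (rule ginv_G[OF g])
  have "f - V f = U (ginv g) (x' + (q - W q))" using x'(2) U_inv1[OF g, of "f - V f"] by simp
  then have "pc (f - V f) = Lf (ginv g) W q" using U_ext_comp(2)[OF g' W x' (1) qN] by simp
  moreover have "pc (f - V f) = f" using ext_adj(2)[OF V csub_0[OF Dsub] f] by simp
  ultimately have "f = Lf (ginv g) W q" by simp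
  then have "norm f \<le> (1 + (1 + \<bar>snd (ginv g)\<bar>) / fst (ginv g)) * norm q"
    using LM_bound(1)[OF g' W qN] by simp
  also have "(1 + (1 + \<bar>snd (ginv g)\<bar>) / fst (ginv g)) = 1 + fst g + \<bar>snd g\<bar>"
    using a_pos[OF g] by (simp add: ginv_def field_simps abs_div)
  finally show ?thesis by (simp add: q_def)
qed

lemma U_sum: "g \<in> G \<Longrightarrow> U g (\<Sum>i\<in>F. h i) = (\<Sum>i\<in>F. U g (h i))"
  by (induction F rule: infinite_finite_induct) (auto simp: U_add U_zero)

lemma Ubound:
  assumes g: "g \<in> G" and g0: "g0 \<in> G" and E: "finite E" "orthonormal E" and u: "u \<in> cspan E"
  shows "norm (U g u - U g0 u) \<le> (\<Sum>e\<in>E. norm (U g e - U g0 e)) * norm u"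
proof -
  have uu: "u = (\<Sum>e\<in>E. hs_inner e u *\<^sub>C e)" using proj_id[OF E u] by (simp add: proj_def)
  have "U g u - U g0 u = (\<Sum>e\<in>E. hs_inner e u *\<^sub>C (U g e - U g0 e))"
    by (subst (1 2) uu) (simp add: U_sum[OF g] U_sum[OF g0] U_scale[OF g] U_scale[OF g0] sum_subtractf sC_diff_right)
  also have "norm \<dots> \<le> (\<Sum>e\<in>E. norm (hs_inner e u *\<^sub>C (U g e - U g0 e)))" by (rule norm_sum)
  also have "\<dots> \<le> (\<Sum>e\<in>E. norm u * norm (U g e - U g0 e))"
  proof (rule sum_mono)
    fix e assume e: "e \<in> E"
    have "cmod (hs_inner e u) \<le> norm e * norm u" by (rule cauchy_schwarz)
    also have "norm e = 1" using E(2) e by (simp add: orthonormal_def)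
    finally show "norm (hs_inner e u *\<^sub>C (U g e - U g0 e)) \<le> norm u * norm (U g e - U g0 e)"
      by (simp add: norm_sC mult_right_mono)
  qed
  also have "\<dots> = (\<Sum>e\<in>E. norm (U g e - U g0 e)) * norm u" by (simp add: sum_distrib_left mult.commute)
  finally show ?thesis .
qed

end


context gset begin

definition al1 :: "real \<times> real \<Rightarrow> complex" where
  "al1 g = complex_of_real (1 / fst g) * \<i> - complex_of_real (1 / fst g) * complex_of_real (snd g)"
definition al2 :: "real \<times> real \<Rightarrow> complex" where
  "al2 g = complex_of_real (1 / fst g) * \<i> + complex_of_real (1 / fst g) * complex_of_real (snd g)"

lemma adj_alpha:
  assumes g: "g \<in> G" and V: "V \<in> contractions D A" and f: "f \<in> Np"
  shows "adj D A (U g (f - V f)) = al1 g *\<^sub>C U g f + al2 g *\<^sub>C U g (V f)"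
proof -
  define c where "c = complex_of_real (1 / fst g)"
  define b where "b = complex_of_real (snd g)"
  have "adj D A (U g (f - V f)) = c *\<^sub>C ((\<i> *\<^sub>C U g f + \<i> *\<^sub>C U g (V f)) - b *\<^sub>C (U g f - U g (V f)))"
    unfolding adj_U_fVf[OF g V f] c_def b_def
    by (simp add: sC_real[symmetric] U_add[OF g] U_diff[OF g] U_scale[OF g])
  also have "\<dots> = (c * \<i>) *\<^sub>C U g f + (c * \<i>) *\<^sub>C U g (V f) - (c * b) *\<^sub>C U g f + (c * b) *\<^sub>C U g (V f)"
    by (simp add: sC_add_right sC_diff_right algebra_simps)
  also have "\<dots> = al1 g *\<^sub>C U g f + al2 g *\<^sub>C U g (V f)"
    unfolding al1_def al2_def c_def[symmetric] b_def[symmetric]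
    by (simp add: sC_add_left sC_diff_left algebra_simps)
  finally show ?thesis .
qed

lemma gen_bound:
  assumes g: "g \<in> G" and g0: "g0 \<in> G" and f: "f \<in> Np" and v: "v \<in> Nm" and v0: "v0 \<in> Nm"
  shows "norm ((k1 *\<^sub>C U g f + k2 *\<^sub>C U g v) - (k1' *\<^sub>C U g0 f + k2' *\<^sub>C U g0 v0))
    \<le> cmod k1 * ((\<Sum>e\<in>Ep. norm (U g e - U g0 e)) * norm f) + cmod (k1 - k1') * norm f
      + cmod k2 * ((\<Sum>e\<in>Em. norm (U g e - U g0 e)) * norm v) + cmod k2 * norm (v - v0)
      + cmod (k2 - k2') * norm v0"
proof -
  have id: "(k1 *\<^sub>C U g f + k2 *\<^sub>C U g v) - (k1' *\<^sub>C U g0 f + k2' *\<^sub>C U g0 v0)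
    = k1 *\<^sub>C (U g f - U g0 f) + (k1 - k1') *\<^sub>C U g0 f + k2 *\<^sub>C (U g v - U g0 v)
      + k2 *\<^sub>C U g0 (v - v0) + (k2 - k2') *\<^sub>C U g0 v0"
    by (simp add: sC_diff_right sC_diff_left U_diff[OF g0] algebra_simps)
  have b1: "norm (U g f - U g0 f) \<le> (\<Sum>e\<in>Ep. norm (U g e - U g0 e)) * norm f"
    using Ubound[OF g g0 Ep(1,2)] f Ep(3) by simp
  have b2: "norm (U g v - U g0 v) \<le> (\<Sum>e\<in>Em. norm (U g e - U g0 e)) * norm v"
    using Ubound[OF g g0 Em(1,2)] v Em(3) by simp
  have "norm (k1 *\<^sub>C (U g f - U g0 f) + (k1 - k1') *\<^sub>C U g0 f + k2 *\<^sub>C (U g v - U g0 v)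
      + k2 *\<^sub>C U g0 (v - v0) + (k2 - k2') *\<^sub>C U g0 v0)
    \<le> norm (k1 *\<^sub>C (U g f - U g0 f)) + norm ((k1 - k1') *\<^sub>C U g0 f) + norm (k2 *\<^sub>C (U g v - U g0 v))
      + norm (k2 *\<^sub>C U g0 (v - v0)) + norm ((k2 - k2') *\<^sub>C U g0 v0)"
    by (smt (verit) norm_triangle_ineq)
  also have "\<dots> = cmod k1 * norm (U g f - U g0 f) + cmod (k1 - k1') * norm f + cmod k2 * norm (U g v - U g0 v)
      + cmod k2 * norm (v - v0) + cmod (k2 - k2') * norm v0"
    by (simp add: norm_sC U_norm[OF g0])
  also have "\<dots> \<le> cmod k1 * ((\<Sum>e\<in>Ep. norm (U g e - U g0 e)) * norm f) + cmod (k1 - k1') * norm f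
      + cmod k2 * ((\<Sum>e\<in>Em. norm (U g e - U g0 e)) * norm v) + cmod k2 * norm (v - v0)
      + cmod (k2 - k2') * norm v0"
    using b1 b2 by (intro add_mono mult_left_mono order_refl) auto
  finally show ?thesis unfolding id .
qed


definition beta :: "real \<times> real \<Rightarrow> real \<times> real \<Rightarrow> real" where
  "beta g0 g = (\<Sum>e\<in>Ep. norm (U g e - U g0 e))"
definition gam :: "real \<times> real \<Rightarrow> real \<times> real \<Rightarrow> real" where
  "gam g0 g = (\<Sum>e\<in>Em. norm (U g e - U g0 e))"
definition EE where
  "EE k1 k2 g0 g d = cmod (k1 g) * beta g0 g + cmod (k1 g - k1 g0) + cmod (k2 g) * gam g0 g
     + cmod (k2 g) * d + cmod (k2 g - k2 g0)"
definition eta :: "real \<times> real \<Rightarrow> real \<times> real \<Rightarrow> real \<Rightarrow> real" where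
  "eta g0 g d = (1/2) * (EE (\<lambda>g. al1 g + \<i>) (\<lambda>g. al2 g - \<i>) g0 g d + EE (\<lambda>g. al1 g - \<i>) (\<lambda>g. al2 g + \<i>) g0 g d)"

lemma beta_nn: "beta g0 g \<ge> 0" unfolding beta_def by (simp add: sum_nonneg)
lemma gam_nn: "gam g0 g \<ge> 0" unfolding gam_def by (simp add: sum_nonneg)
lemma EE_nn: "d \<ge> 0 \<Longrightarrow> EE k1 k2 g0 g d \<ge> 0" unfolding EE_def using beta_nn gam_nn by simp

lemma PhiPsi:
  assumes g: "g \<in> G" and V: "V \<in> contractions D A" and f: "f \<in> Np"
  shows "adj D A (U g (f - V f)) + \<i> *\<^sub>C U g (f - V f) = (al1 g + \<i>) *\<^sub>C U g f + (al2 g - \<i>) *\<^sub>C U g (V f)"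
    "adj D A (U g (f - V f)) - \<i> *\<^sub>C U g (f - V f) = (al1 g - \<i>) *\<^sub>C U g f + (al2 g + \<i>) *\<^sub>C U g (V f)"
  unfolding adj_alpha[OF g V f] unfolding U_diff[OF g]
  by (simp_all add: sC_add_left sC_diff_left sC_diff_right algebra_simps)

lemma EE_bound:
  assumes g: "g \<in> G" and g0: "g0 \<in> G" and V: "V \<in> contractions D A" and V0: "V0 \<in> contractions D A"
    and f: "f \<in> Np" and d: "d \<ge> 0" and hd: "norm (V f - V0 f) \<le> d * norm f"
  shows "norm ((k1 g *\<^sub>C U g f + k2 g *\<^sub>C U g (V f)) - (k1 g0 *\<^sub>C U g0 f + k2 g0 *\<^sub>C U g0 (V0 f)))
     \<le> EE k1 k2 g0 g d * norm f"
proof -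
  have v: "V f \<in> Nm" "V0 f \<in> Nm" using contr_D(3)[OF V f] contr_D(3)[OF V0 f] by auto
  have nv: "norm (V f) \<le> norm f" "norm (V0 f) \<le> norm f" using contr_D(4)[OF V f] contr_D(4)[OF V0 f] by auto
  have "norm ((k1 g *\<^sub>C U g f + k2 g *\<^sub>C U g (V f)) - (k1 g0 *\<^sub>C U g0 f + k2 g0 *\<^sub>C U g0 (V0 f)))
    \<le> cmod (k1 g) * (beta g0 g * norm f) + cmod (k1 g - k1 g0) * norm f
      + cmod (k2 g) * (gam g0 g * norm (V f)) + cmod (k2 g) * norm (V f - V0 f)
      + cmod (k2 g - k2 g0) * norm (V0 f)"
    unfolding beta_def gam_def by (rule gen_bound[OF g g0 f v])
  also have "\<dots> \<le> cmod (k1 g) * (beta g0 g * norm f) + cmod (k1 g - k1 g0) * norm f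
      + cmod (k2 g) * (gam g0 g * norm f) + cmod (k2 g) * (d * norm f)
      + cmod (k2 g - k2 g0) * norm f"
    using nv hd beta_nn gam_nn by (intro add_mono mult_left_mono order_refl) auto
  also have "\<dots> = EE k1 k2 g0 g d * norm f" unfolding EE_def by (simp add: algebra_simps)
  finally show ?thesis .
qed

lemma LM_diff_bound:
  assumes g: "g \<in> G" and g0: "g0 \<in> G" and V: "V \<in> contractions D A" and V0: "V0 \<in> contractions D A"
    and f: "f \<in> Np" and d: "d \<ge> 0" and hd: "norm (V f - V0 f) \<le> d * norm f"
  shows "norm (Lf g V f - Lf g0 V0 f) \<le> eta g0 g d * norm f"
    "norm (Mf g V f - Mf g0 V0 f) \<le> eta g0 g d * norm f"
proof -
  define E1 where "E1 = EE (\<lambda>g. al1 g + \<i>) (\<lambda>g. al2 g - \<i>) g0 g d"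
  define E2 where "E2 = EE (\<lambda>g. al1 g - \<i>) (\<lambda>g. al2 g + \<i>) g0 g d"
  have e12: "E1 \<ge> 0" "E2 \<ge> 0" unfolding E1_def E2_def using EE_nn d by auto
  have nf: "norm f \<ge> 0" by simp
  have "Lf g V f - Lf g0 V0 f = (-\<i>/2) *\<^sub>C (Pp (adj D A (U g (f - V f)) + \<i> *\<^sub>C U g (f - V f))
      - Pp (adj D A (U g0 (f - V0 f)) + \<i> *\<^sub>C U g0 (f - V0 f)))"
    by (simp add: Lf_def pc_def sC_diff_right)
  also have "\<dots> = (-\<i>/2) *\<^sub>C Pp ((al1 g + \<i>) *\<^sub>C U g f + (al2 g - \<i>) *\<^sub>C U g (V f)
      - ((al1 g0 + \<i>) *\<^sub>C U g0 f + (al2 g0 - \<i>) *\<^sub>C U g0 (V0 f)))"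
    unfolding PhiPsi(1)[OF g V f] PhiPsi(1)[OF g0 V0 f] proj_diff by simp
  finally have "norm (Lf g V f - Lf g0 V0 f) \<le> (1/2) * norm ((al1 g + \<i>) *\<^sub>C U g f + (al2 g - \<i>) *\<^sub>C U g (V f)
      - ((al1 g0 + \<i>) *\<^sub>C U g0 f + (al2 g0 - \<i>) *\<^sub>C U g0 (V0 f)))"
    using Pp_norm by (simp add: norm_sC)
  also have "\<dots> \<le> (1/2) * (E1 * norm f)" unfolding E1_def
    using EE_bound[OF g g0 V V0 f d hd, of "\<lambda>g. al1 g + \<i>" "\<lambda>g. al2 g - \<i>"] by simp
  also have "\<dots> \<le> eta g0 g d * norm f" unfolding eta_def E1_def[symmetric] E2_def[symmetric]
    using e12 nf by (simp add: mult_right_mono algebra_simps)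
  finally show "norm (Lf g V f - Lf g0 V0 f) \<le> eta g0 g d * norm f" .
  have "Mf g V f - Mf g0 V0 f = (-\<i>/2) *\<^sub>C (Pm (adj D A (U g (f - V f)) - \<i> *\<^sub>C U g (f - V f))
      - Pm (adj D A (U g0 (f - V0 f)) - \<i> *\<^sub>C U g0 (f - V0 f)))"
    by (simp add: Mf_def mc_def sC_diff_right sC_minus_left[symmetric])
  also have "\<dots> = (-\<i>/2) *\<^sub>C Pm ((al1 g - \<i>) *\<^sub>C U g f + (al2 g + \<i>) *\<^sub>C U g (V f)
      - ((al1 g0 - \<i>) *\<^sub>C U g0 f + (al2 g0 + \<i>) *\<^sub>C U g0 (V0 f)))"
    unfolding PhiPsi(2)[OF g V f] PhiPsi(2)[OF g0 V0 f] proj_diff by simp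
  finally have "norm (Mf g V f - Mf g0 V0 f) \<le> (1/2) * norm ((al1 g - \<i>) *\<^sub>C U g f + (al2 g + \<i>) *\<^sub>C U g (V f)
      - ((al1 g0 - \<i>) *\<^sub>C U g0 f + (al2 g0 + \<i>) *\<^sub>C U g0 (V0 f)))"
    using Pm_norm by (simp add: norm_sC)
  also have "\<dots> \<le> (1/2) * (E2 * norm f)" unfolding E2_def
    using EE_bound[OF g g0 V V0 f d hd, of "\<lambda>g. al1 g - \<i>" "\<lambda>g. al2 g + \<i>"] by simp
  also have "\<dots> \<le> eta g0 g d * norm f" unfolding eta_def E1_def[symmetric] E2_def[symmetric]
    using e12 nf by (simp add: mult_right_mono algebra_simps)
  finally show "norm (Mf g V f - Mf g0 V0 f) \<le> eta g0 g d * norm f" .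
qed

end


context gset begin

lemma contr_zero: "V \<in> contractions D A \<Longrightarrow> V 0 = 0"
  using contr_D(2)[of V 0 0] csub_0[OF Np_csub] by simp

lemma opdist_facts:
  assumes V: "V \<in> contractions D A" and V0: "V0 \<in> contractions D A"
  shows "bdd_above ((\<lambda>f. norm (V f - V0 f)) ` {f \<in> Np. norm f \<le> 1})"
    "{f \<in> Np. norm f \<le> 1} \<noteq> {}"
proof -
  show "bdd_above ((\<lambda>f. norm (V f - V0 f)) ` {f \<in> Np. norm f \<le> 1})"
  proof (rule bdd_aboveI[of _ 2])
    fix y assume "y \<in> (\<lambda>f. norm (V f - V0 f)) ` {f \<in> Np. norm f \<le> 1}"
    then obtain f where f: "f \<in> Np" "norm f \<le> 1" "y = norm (V f - V0 f)" by blast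
    have "norm (V f - V0 f) \<le> norm (V f) + norm (V0 f)" by (rule norm_triangle_ineq4)
    also have "\<dots> \<le> 2" using contr_D(4)[OF V f(1)] contr_D(4)[OF V0 f(1)] f(2) by simp
    finally show "y \<le> 2" using f(3) by simp
  qed
  show "{f \<in> Np. norm f \<le> 1} \<noteq> {}" using csub_0[OF Np_csub] by force
qed

lemma opdist_nn:
  assumes V: "V \<in> contractions D A" and V0: "V0 \<in> contractions D A"
  shows "opdist D A V V0 \<ge> 0"
proof -
  have "norm (V 0 - V0 0) \<le> opdist D A V V0"
    unfolding opdist_def by (rule cSUP_upper[OF _ opdist_facts(1)[OF V V0]]) (use csub_0[OF Np_csub] in simp)
  then show ?thesis by (smt (verit) norm_ge_zero)
qed

lemma opdist_bound:
  assumes V: "V \<in> contractions D A" and V0: "V0 \<in> contractions D A" and f: "f \<in> Np"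
  shows "norm (V f - V0 f) \<le> opdist D A V V0 * norm f"
proof (cases "f = 0")
  case True then show ?thesis using contr_zero[OF V] contr_zero[OF V0] by simp
next
  case False
  define c where "c = complex_of_real (1 / norm f)"
  have nf: "norm f > 0" using False by simp
  have f1: "c *\<^sub>C f \<in> Np" "norm (c *\<^sub>C f) \<le> 1" using csub_scale[OF Np_csub f] nf by (auto simp: c_def norm_sC norm_divide)
  have "norm (V (c *\<^sub>C f) - V0 (c *\<^sub>C f)) \<le> opdist D A V V0"
    unfolding opdist_def by (rule cSUP_upper[OF _ opdist_facts(1)[OF V V0]]) (use f1 in simp)
  moreover have "norm (V (c *\<^sub>C f) - V0 (c *\<^sub>C f)) = norm (V f - V0 f) / norm f"
    using nf by (simp add: contr_D(2)[OF V f] contr_D(2)[OF V0 f] sC_diff_right[symmetric] norm_sC c_def norm_divide)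
  ultimately show ?thesis using nf by (simp add: divide_le_eq)
qed

lemma opdist_le:
  assumes W: "W \<in> contractions D A" and W0: "W0 \<in> contractions D A"
    and b: "\<And>q. q \<in> Np \<Longrightarrow> norm q \<le> 1 \<Longrightarrow> norm (W q - W0 q) \<le> B"
  shows "opdist D A W W0 \<le> B"
  unfolding opdist_def by (rule cSUP_least[OF opdist_facts(2)[OF W W0]]) (use b in auto)

definition Kf :: "real \<times> real \<Rightarrow> real" where "Kf g = 1 + fst g + \<bar>snd g\<bar>"
definition Cf :: "real \<times> real \<Rightarrow> real" where "Cf g = 1 + (1 + \<bar>snd g\<bar>) / fst g"

lemma Kf_pos: "g \<in> G \<Longrightarrow> Kf g > 0" using a_pos[of g] by (simp add: Kf_def add_pos_nonneg)
lemma Cf_pos: "g \<in> G \<Longrightarrow> Cf g > 0" using a_pos[of g] by (simp add: Cf_def add_pos_nonneg)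
lemma eta_nn: "d \<ge> 0 \<Longrightarrow> eta g0 g d \<ge> 0" unfolding eta_def using EE_nn by (simp add: add_nonneg_nonneg)

lemma qbound:
  assumes g: "g \<in> G" and g0: "g0 \<in> G" and V: "V \<in> contractions D A" and V0: "V0 \<in> contractions D A"
    and d: "d \<ge> 0" and hd: "\<And>f. f \<in> Np \<Longrightarrow> norm (V f - V0 f) \<le> d * norm f"
    and q: "q \<in> Np" "norm q \<le> 1"
  shows "norm (Gamma U D A g V q - Gamma U D A g0 V0 q) \<le> eta g0 g d * Kf g * (1 + Cf g0 * Kf g0)"
proof -
  obtain f where f: "f \<in> Np" "Lf g V f = q" using L_surj[OF g V q(1)] by blast
  obtain f0 where f0: "f0 \<in> Np" "Lf g0 V0 f0 = q" using L_surj[OF g0 V0 q(1)] by blast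
  have G1: "Gamma U D A g V q = Mf g V f" using Gam_LM[OF g V f(1)] f(2) by simp
  have G0: "Gamma U D A g0 V0 q = Mf g0 V0 f0" using Gam_LM[OF g0 V0 f0(1)] f0(2) by simp
  define et where "et = eta g0 g d"
  have et: "et \<ge> 0" unfolding et_def by (rule eta_nn[OF d])
  have nf: "norm f \<le> Kf g" using L_lower[OF g V f(1)] f(2) q(2) Kf_pos[OF g]
    unfolding Kf_def by (smt (verit) mult_left_le)
  have m1: "norm (Mf g V f - Mf g0 V0 f) \<le> et * norm f"
    unfolding et_def by (rule LM_diff_bound(2)[OF g g0 V V0 f(1) d hd[OF f(1)]])
  have l1: "norm (Lf g V f - Lf g0 V0 f) \<le> et * norm f"
    unfolding et_def by (rule LM_diff_bound(1)[OF g g0 V V0 f(1) d hd[OF f(1)]])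
  have ff0: "f - f0 \<in> Np" by (rule csub_diff[OF Np_csub f(1) f0(1)])
  have "norm (f - f0) \<le> Kf g0 * norm (Lf g0 V0 (f - f0))"
    using L_lower[OF g0 V0 ff0] by (simp add: Kf_def)
  also have "Lf g0 V0 (f - f0) = Lf g0 V0 f - Lf g V f"
    using LM_diff(1)[OF g0 V0 f(1) f0(1)] f0(2) f(2) by simp
  also have "norm (Lf g0 V0 f - Lf g V f) \<le> et * norm f" using l1 by (simp add: norm_minus_commute)
  finally have d1: "norm (f - f0) \<le> Kf g0 * (et * norm f)" using Kf_pos[OF g0] by (simp add: mult_left_mono)
  have m2: "norm (Mf g0 V0 (f - f0)) \<le> Cf g0 * norm (f - f0)"
    using LM_bound(2)[OF g0 V0 ff0] by (simp add: Cf_def)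
  have "Gamma U D A g V q - Gamma U D A g0 V0 q = (Mf g V f - Mf g0 V0 f) + Mf g0 V0 (f - f0)"
    unfolding G1 G0 LM_diff(2)[OF g0 V0 f(1) f0(1)] by simp
  then have "norm (Gamma U D A g V q - Gamma U D A g0 V0 q) \<le> norm (Mf g V f - Mf g0 V0 f) + norm (Mf g0 V0 (f - f0))"
    by (simp add: norm_triangle_ineq)
  also have "\<dots> \<le> et * norm f + Cf g0 * (Kf g0 * (et * norm f))"
    using m1 m2 d1 Cf_pos[OF g0] by (smt (verit) mult_left_mono)
  also have "\<dots> = et * norm f * (1 + Cf g0 * Kf g0)" by (simp add: algebra_simps)
  also have "\<dots> \<le> et * Kf g * (1 + Cf g0 * Kf g0)"
  proof -
    have "0 \<le> 1 + Cf g0 * Kf g0" using Cf_pos[OF g0] Kf_pos[OF g0] by (simp add: add_nonneg_nonneg)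
    then show ?thesis using nf et by (intro mult_right_mono mult_left_mono) auto
  qed
  finally show ?thesis unfolding et_def .
qed

end


context gset begin

definition Bd :: "real \<times> real \<Rightarrow> (real \<times> real) \<times> real \<Rightarrow> real" where
  "Bd g0 z = eta g0 (fst z) (snd z) * Kf (fst z) * (1 + Cf g0 * Kf g0)"

lemma cU: "continuous_on (G \<times> UNIV) (\<lambda>z. U (fst z) e)"
proof -
  have c: "continuous_on G (\<lambda>g. U g e)" using rep by (simp add: strongly_cont_unitary_rep_def)
  show ?thesis by (rule continuous_on_compose2[OF c continuous_on_fst]) auto
qed

lemma Bd_cont: "continuous_on (G \<times> UNIV) (Bd g0)"
proof -
  have nz: "\<forall>z\<in>G \<times> UNIV. fst (fst z) \<noteq> 0" using a_pos by fastforce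
  show ?thesis
    unfolding Bd_def eta_def EE_def beta_def gam_def al1_def al2_def Kf_def
    by (intro continuous_intros cU) (use nz in auto)
qed

lemma Bd_zero: "Bd g0 (g0, 0) = 0"
  by (simp add: Bd_def eta_def EE_def beta_def gam_def)

lemma main1:
  assumes g0: "g0 \<in> G" and V0: "V0 \<in> contractions D A" and e: "\<epsilon> > 0"
  shows "\<exists>\<delta>>0. \<forall>g\<in>G. \<forall>V\<in>contractions D A. dist g g0 < \<delta> \<and> opdist D A V V0 < \<delta> \<longrightarrow>
            opdist D A (Gamma U D A g V) (Gamma U D A g0 V0) < \<epsilon>"
proof -
  have "(g0, 0) \<in> G \<times> (UNIV :: real set)" using g0 by simp
  then obtain d1 where d1: "d1 > 0"
    "\<forall>z\<in>G \<times> UNIV. dist z (g0, 0) < d1 \<longrightarrow> dist (Bd g0 z) (Bd g0 (g0, 0)) < \<epsilon> / 2"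
    using Bd_cont[of g0] e unfolding continuous_on_iff by (meson half_gt_zero)
  show ?thesis
  proof (intro exI[of _ "d1 / 2"] conjI ballI impI)
    show "d1 / 2 > 0" using d1(1) by simp
    fix g V assume g: "g \<in> G" and V: "V \<in> contractions D A"
      and h: "dist g g0 < d1 / 2 \<and> opdist D A V V0 < d1 / 2"
    define d where "d = opdist D A V V0"
    have d0: "d \<ge> 0" unfolding d_def by (rule opdist_nn[OF V V0])
    have "dist (g, d) (g0, 0) = sqrt ((dist g g0)\<^sup>2 + (dist d 0)\<^sup>2)" by (rule dist_Pair_Pair)
    also have "\<dots> < d1"
      by (rule sqrt_sum_squares_half_less) (use h d0 in \<open>auto simp: d_def dist_real_def\<close>)
    finally have "dist (g, d) (g0, 0) < d1" .
    then have "dist (Bd g0 (g, d)) (Bd g0 (g0, 0)) < \<epsilon> / 2" using d1(2) g by auto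
    then have bd: "Bd g0 (g, d) < \<epsilon> / 2" by (simp add: Bd_zero dist_real_def)
    have W: "Gamma U D A g V \<in> contractions D A" "Gamma U D A g0 V0 \<in> contractions D A"
      using Gamma_char(1)[OF g V] Gamma_char(1)[OF g0 V0] by auto
    have "opdist D A (Gamma U D A g V) (Gamma U D A g0 V0) \<le> Bd g0 (g, d)"
      unfolding Bd_def fst_conv snd_conv
      by (rule opdist_le[OF W]) (rule qbound[OF g g0 V V0 d0], use opdist_bound[OF V V0] d_def in auto)
    then show "opdist D A (Gamma U D A g V) (Gamma U D A g0 V0) < \<epsilon>" using bd e by linarith
  qed
qed

lemma opdist_self: "V \<in> contractions D A \<Longrightarrow> opdist D A V V = 0"
  using opdist_nn[of V V] opdist_le[of V V 0] by fastforce

end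

theorem corollary4p2:
  fixes G :: "(real \<times> real) set"
    and U :: "real \<times> real \<Rightarrow> 'a::chilbert \<Rightarrow> 'a"
    and D :: "'a set" and A :: "'a \<Rightarrow> 'a"
  assumes "aff_subgroup G"
    and "strongly_cont_unitary_rep G U"
    and "lin_op D A" and "densely_defined D" and "closed_op D A" and "symmetric_op D A"
    and "G_invariant G U D A"
    and "finite_dim (Nplus D A)" and "finite_dim (Nminus D A)"
  shows "(\<forall>g0\<in>G. \<forall>V0\<in>contractions D A. \<forall>\<epsilon>>0. \<exists>\<delta>>0. \<forall>g\<in>G. \<forall>V\<in>contractions D A.
            dist g g0 < \<delta> \<and> opdist D A V V0 < \<delta> \<longrightarrow>
            opdist D A (Gamma U D A g V) (Gamma U D A g0 V0) < \<epsilon>)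
       \<and> (\<forall>\<gamma> :: real \<Rightarrow> real \<times> real.
            continuous_on UNIV \<gamma> \<and> (\<forall>s t. \<gamma> (s + t) = gmult (\<gamma> s) (\<gamma> t)) \<and> range \<gamma> = G \<longrightarrow>
            (\<forall>V\<in>contractions D A. \<forall>t0. \<forall>\<epsilon>>0. \<exists>\<delta>>0. \<forall>t. \<bar>t - t0\<bar> < \<delta> \<longrightarrow>
               opdist D A (Gamma U D A (\<gamma> t) V) (Gamma U D A (\<gamma> t0) V) < \<epsilon>))"
proof -
  interpret gset D A G U
    by (unfold_locales) (use assms in auto)
  have P1: "\<forall>g0\<in>G. \<forall>V0\<in>contractions D A. \<forall>\<epsilon>>0. \<exists>\<delta>>0. \<forall>g\<in>G. \<forall>V\<in>contractions D A.
            dist g g0 < \<delta> \<and> opdist D A V V0 < \<delta> \<longrightarrow>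
            opdist D A (Gamma U D A g V) (Gamma U D A g0 V0) < \<epsilon>"
    using main1 by blast
  have P2: "\<forall>V\<in>contractions D A. \<forall>t0. \<forall>\<epsilon>>0. \<exists>\<delta>>0. \<forall>t. \<bar>t - t0\<bar> < \<delta> \<longrightarrow>
               opdist D A (Gamma U D A (\<gamma> t) V) (Gamma U D A (\<gamma> t0) V) < \<epsilon>"
    if c: "continuous_on UNIV \<gamma>" and r: "range \<gamma> = G" for \<gamma> :: "real \<Rightarrow> real \<times> real"
  proof (intro ballI allI impI)
    fix V t0 and \<epsilon> :: real assume V: "V \<in> contractions D A" and e: "\<epsilon> > 0"
    have gt: "\<gamma> t \<in> G" for t using r by blast
    obtain \<delta> where \<delta>: "\<delta> > 0" "\<forall>g\<in>G. \<forall>V'\<in>contractions D A. dist g (\<gamma> t0) < \<delta> \<and> opdist D A V' V < \<delta> \<longrightarrow>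
            opdist D A (Gamma U D A g V') (Gamma U D A (\<gamma> t0) V) < \<epsilon>"
      using main1[OF gt V e] by blast
    obtain \<delta>' where \<delta>': "\<delta>' > 0" "\<forall>t. dist t t0 < \<delta>' \<longrightarrow> dist (\<gamma> t) (\<gamma> t0) < \<delta>"
      using c \<delta>(1) unfolding continuous_on_iff by blast
    show "\<exists>\<delta>>0. \<forall>t. \<bar>t - t0\<bar> < \<delta> \<longrightarrow> opdist D A (Gamma U D A (\<gamma> t) V) (Gamma U D A (\<gamma> t0) V) < \<epsilon>"
    proof (intro exI[of _ \<delta>'] conjI allI impI)
      show "\<delta>' > 0" by (rule \<delta>'(1))
      fix t assume "\<bar>t - t0\<bar> < \<delta>'"
      then have "dist (\<gamma> t) (\<gamma> t0) < \<delta>" using \<delta>'(2) by (simp add: dist_real_def)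
      moreover have "opdist D A V V < \<delta>" using opdist_self[OF V] \<delta>(1) by simp
      ultimately show "opdist D A (Gamma U D A (\<gamma> t) V) (Gamma U D A (\<gamma> t0) V) < \<epsilon>"
        using \<delta>(2) gt V by blast
    qed
  qed
  show ?thesis using P1 P2 by blast
qed


end
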